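(* Let $\mathcal{D}=\{(x_i,a_i,y_i)\}_{i=1}^N$ be a dataset with $a_i\in\{1,2\}$, $y_i\in\{0,1\}$. The procedure "GABOS learning with post-processing" (described in the context), with misclassification loss and with bias measured by demographic parity or equal opportunity, is slack-consistent: for every individual $(x,a)$ (not necessarily in $\mathcal{D}$), the prediction $f_\beta(x,a)$ of the returned classifier is monotonic in the slack $\beta>0$.
   Context: GABOS learning with post-processing, for slack $\beta>0$: (1) Split $\mathcal{D}$ into $\mathcal{D}_j=\{(x_i,a_i,y_i): a_i=j\}$, $j=1,2$. (2) For each $j$ fix (independently of $\beta$) a finite partition $c_j:\mathcal{X}\to\{1,\dots,M\}$ of the feature space such that every cell contains at least one member of $\mathcal{D}_j$ (e.g. obtained by clustering or a decision tree). (3) For each $j$ and cell $m$ set $f_j(m)=\frac{|\{i: y_i=1, (x_i,a_i,y_i)\in\mathcal{D}_j, c_j(x_i)=m\}|}{|\{i:(x_i,a_i,y_i)\in\mathcal{D}_j, c_j(x_i)=m\}|}$. (4) Define the score $\mathcal{R}(x,a)=f_a(c_a(x))$ and run the post-processing method below on $\mathcal{R}$ with slack $\beta$; return the resulting thresholded classifier $f_\beta$. Post-processing: a normalized threshold $\tau\in[0,1]$ for group $a$ is a threshold classifier on $\mathcal{R}$ within group $a$, randomized over at most two adjacent deterministic thresholds, with positive prediction rate $1-\tau$ in group $a$ on $\mathcal{D}$; a pair $(\tau_1,\tau_2)$ defines a classifier with misclassification loss $\mathcal{L}(\tau_1,\tau_2)$ on $\mathcal{D}$ and bias $\mathcal{B}(\tau_1,\tau_2)$.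 Among all $(\tau_1,\tau_2)\in[0,1]^2$ minimizing $\mathcal{L}$ subject to $|\mathcal{B}|\le\beta$, keep those with smallest $|\mathcal{B}|$, then those with smallest $\tau_1$, then return the one with smallest $\tau_2$. Bias: for a classifier $f$ with positive-prediction probability $f(x,a)\in[0,1]$, demographic-parity bias is $\frac{\sum_i f(x_i,a_i)\mathbb{1}[a_i=1]}{\sum_i\mathbb{1}[a_i=1]}-\frac{\sum_i f(x_i,a_i)\mathbb{1}[a_i=2]}{\sum_i\mathbb{1}[a_i=2]}$; equal-opportunity bias is the same with $y_i=1$ added to every indicator. Slack-consistency: for every $(x,a)$ and all $\beta_1<\beta_2<\beta_3$, either $f_{\beta_1}(x,a)\le f_{\beta_2}(x,a)\le f_{\beta_3}(x,a)$ or $f_{\beta_1}(x,a)\ge f_{\beta_2}(x,a)\ge f_{\beta_3}(x,a)$. *)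

theory Defs
  imports Complex_Main
begin

type_synonym 'x dataset = "('x \<times> nat \<times> nat) list"

definition xs_of :: "'x dataset \<Rightarrow> nat \<Rightarrow> 'x" where "xs_of D i = fst (D ! i)"
definition as_of :: "'x dataset \<Rightarrow> nat \<Rightarrow> nat" where "as_of D i = fst (snd (D ! i))"
definition ys_of :: "'x dataset \<Rightarrow> nat \<Rightarrow> nat" where "ys_of D i = snd (snd (D ! i))"

definition grp :: "'x dataset \<Rightarrow> nat \<Rightarrow> nat set" where
  "grp D j = {i. i < length D \<and> as_of D i = j}"

text \<open>Cell frequency f_j(m) for the partitions c_j (c j is the partition of group j).\<close>
definition cell_rate :: "'x dataset \<Rightarrow> (nat \<Rightarrow> 'x \<Rightarrow> nat) \<Rightarrow> nat \<Rightarrow> nat \<Rightarrow> real" where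
  "cell_rate D c j m =
     real (card {i \<in> grp D j. c j (xs_of D i) = m \<and> ys_of D i = 1})
     / real (card {i \<in> grp D j. c j (xs_of D i) = m})"

definition score :: "'x dataset \<Rightarrow> (nat \<Rightarrow> 'x \<Rightarrow> nat) \<Rightarrow> 'x \<Rightarrow> nat \<Rightarrow> real" where
  "score D c x a = cell_rate D c a (c a x)"

text \<open>Randomized threshold classifier on the score: mixture with weight p of the two adjacent
  deterministic thresholds "score \<ge> t" and "score > t" (probability of predicting 1).\<close>
definition thr_clf :: "real \<Rightarrow> real \<Rightarrow> real \<Rightarrow> real" where
  "thr_clf t p s = (if t < s then 1 else if s = t then p else 0)"

definition pos_rate :: "'x dataset \<Rightarrow> (nat \<Rightarrow> 'x \<Rightarrow> nat) \<Rightarrow> nat \<Rightarrow> (real \<Rightarrow> real) \<Rightarrow> real" where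
  "pos_rate D c a h = (\<Sum>i\<in>grp D a. h (score D c (xs_of D i) a)) / real (card (grp D a))"

definition norm_thr_clf :: "'x dataset \<Rightarrow> (nat \<Rightarrow> 'x \<Rightarrow> nat) \<Rightarrow> nat \<Rightarrow> real \<Rightarrow> (real \<Rightarrow> real)" where
  "norm_thr_clf D c a \<tau> = (SOME h. \<exists>t p. t \<in> (\<lambda>i. score D c (xs_of D i) a) ` grp D a
       \<and> 0 \<le> p \<and> p \<le> 1 \<and> h = thr_clf t p \<and> pos_rate D c a h = 1 - \<tau>)"

definition pp_clf :: "'x dataset \<Rightarrow> (nat \<Rightarrow> 'x \<Rightarrow> nat) \<Rightarrow> real \<times> real \<Rightarrow> 'x \<Rightarrow> nat \<Rightarrow> real" where
  "pp_clf D c \<tau> x a = norm_thr_clf D c a (if a = 1 then fst \<tau> else snd \<tau>) (score D c x a)"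

definition pred_at :: "'x dataset \<Rightarrow> (nat \<Rightarrow> 'x \<Rightarrow> nat) \<Rightarrow> real \<times> real \<Rightarrow> nat \<Rightarrow> real" where
  "pred_at D c \<tau> i = pp_clf D c \<tau> (xs_of D i) (as_of D i)"

definition mis_loss :: "'x dataset \<Rightarrow> (nat \<Rightarrow> 'x \<Rightarrow> nat) \<Rightarrow> real \<times> real \<Rightarrow> real" where
  "mis_loss D c \<tau> = (\<Sum>i<length D. if ys_of D i = 1 then 1 - pred_at D c \<tau> i else pred_at D c \<tau> i)
                    / real (length D)"

datatype bias_kind = DemParity | EqOpp

definition relevant :: "bias_kind \<Rightarrow> 'x dataset \<Rightarrow> nat \<Rightarrow> bool" where
  "relevant k D i = (case k of DemParity \<Rightarrow> True | EqOpp \<Rightarrow> ys_of D i = 1)"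

definition bias :: "bias_kind \<Rightarrow> 'x dataset \<Rightarrow> (nat \<Rightarrow> 'x \<Rightarrow> nat) \<Rightarrow> real \<times> real \<Rightarrow> real" where
  "bias k D c \<tau> =
     (\<Sum>i | i \<in> grp D 1 \<and> relevant k D i. pred_at D c \<tau> i) / real (card {i. i \<in> grp D 1 \<and> relevant k D i})
   - (\<Sum>i | i \<in> grp D 2 \<and> relevant k D i. pred_at D c \<tau> i) / real (card {i. i \<in> grp D 2 \<and> relevant k D i})"

definition feasible :: "bias_kind \<Rightarrow> 'x dataset \<Rightarrow> (nat \<Rightarrow> 'x \<Rightarrow> nat) \<Rightarrow> real \<Rightarrow> (real \<times> real) set" where
  "feasible k D c \<beta> = {\<tau>. fst \<tau> \<in> {0..1} \<and> snd \<tau> \<in> {0..1} \<and> \<bar>bias k D c \<tau>\<bar> \<le> \<beta>}"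

definition argmin_on :: "('a \<Rightarrow> real) \<Rightarrow> 'a set \<Rightarrow> 'a set" where
  "argmin_on g S = {s \<in> S. \<forall>s'\<in>S. g s \<le> g s'}"

definition pp_select :: "bias_kind \<Rightarrow> 'x dataset \<Rightarrow> (nat \<Rightarrow> 'x \<Rightarrow> nat) \<Rightarrow> real \<Rightarrow> real \<times> real" where
  "pp_select k D c \<beta> = (THE \<tau>. \<tau> \<in>
      argmin_on snd (argmin_on fst (argmin_on (\<lambda>\<tau>. \<bar>bias k D c \<tau>\<bar>)
        (argmin_on (mis_loss D c) (feasible k D c \<beta>)))))"

definition gabos_pp :: "bias_kind \<Rightarrow> 'x dataset \<Rightarrow> (nat \<Rightarrow> 'x \<Rightarrow> nat) \<Rightarrow> real \<Rightarrow> 'x \<Rightarrow> nat \<Rightarrow> real" where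
  "gabos_pp k D c \<beta> x a = pp_clf D c (pp_select k D c \<beta>) x a"

definition slack_consistent :: "(real \<Rightarrow> 'x \<Rightarrow> nat \<Rightarrow> real) \<Rightarrow> bool" where
  "slack_consistent F = (\<forall>x a \<beta>1 \<beta>2 \<beta>3. a \<in> {1,2} \<and> 0 < \<beta>1 \<and> \<beta>1 < \<beta>2 \<and> \<beta>2 < \<beta>3 \<longrightarrow>
      (F \<beta>1 x a \<le> F \<beta>2 x a \<and> F \<beta>2 x a \<le> F \<beta>3 x a) \<or>
      (F \<beta>1 x a \<ge> F \<beta>2 x a \<and> F \<beta>2 x a \<ge> F \<beta>3 x a))"

end

theory Submission
  imports Defs "HOL-Analysis.Analysis"
begin

lemma argmin_nonempty_compact:
  fixes g :: "'a::t2_space \<Rightarrow> real"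
  assumes "compact S" "S \<noteq> {}" "continuous_on S g"
  shows "compact (argmin_on g S) \<and> argmin_on g S \<noteq> {}"
proof -
  obtain x where x: "x \<in> S" "\<forall>y\<in>S. g x \<le> g y"
    using continuous_attains_inf[OF assms] by blast
  have eq: "argmin_on g S = S \<inter> g -` {..g x}"
    using x unfolding argmin_on_def by force
  have "closed (S \<inter> g -` {..g x})"
    using continuous_closed_preimage[OF assms(3) compact_imp_closed[OF assms(1)]] by auto
  hence "compact (argmin_on g S)"
    unfolding eq using compact_Int_closed[OF assms(1)] by (metis inf.absorb_iff2 inf.cobounded1 inf_assoc)
  moreover have "x \<in> argmin_on g S" using x unfolding argmin_on_def by auto
  ultimately show ?thesis by auto
qed

lemma argmin_sub:
  assumes "S \<subseteq> T" "x \<in> argmin_on g T" "x \<in> S"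
  shows "argmin_on g S = argmin_on g T \<inter> S"
  using assms unfolding argmin_on_def by (auto intro: order_trans)

lemma argmin_subset: "argmin_on g S \<subseteq> S"
  unfolding argmin_on_def by auto

definition gconv :: "(real \<Rightarrow> real) \<Rightarrow> (real \<Rightarrow> real) \<Rightarrow> bool" where
  "gconv b l = (\<forall>x\<in>{0..1}. \<forall>y\<in>{0..1}. \<forall>t\<in>{0..1}. \<exists>s\<in>{0..1}.
      b s = (1-t)*b x + t*b y \<and> l s \<le> (1-t)*l x + t*l y)"

lemma gconv_pair:
  assumes "gconv b l" "x \<in> {0..1}" "y \<in> {0..1}" "0 \<le> d" "d \<le> b y - b x"
  shows "\<exists>s\<in>{0..1}. \<exists>s'\<in>{0..1}. b s = b x + d \<and> b s' = b y - d \<and> l s + l s' \<le> l x + l y"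
proof (cases "b y = b x")
  case True
  then have "d = 0" using assms by auto
  then have "b x = b x + d \<and> b y = b y - d \<and> l x + l y \<le> l x + l y" by simp
  then show ?thesis using assms(2,3) by blast
next
  case False
  define t where "t = d / (b y - b x)"
  have pos: "b y - b x > 0" using assms False by auto
  have t01: "t \<in> {0..1}" using assms pos unfolding t_def by auto
  have t1: "1 - t \<in> {0..1}" using t01 by auto
  obtain s where s: "s \<in> {0..1}" "b s = (1-t)*b x + t*b y" "l s \<le> (1-t)*l x + t*l y"
    using assms(1) t01 assms(2,3) unfolding gconv_def by blast
  obtain s' where s': "s' \<in> {0..1}" "b s' = (1-(1-t))*b x + (1-t)*b y" "l s' \<le> (1-(1-t))*l x + (1-t)*l y"
    using assms(1) t1 assms(2,3) unfolding gconv_def by blast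
  have td: "t * (b y - b x) = d" using pos unfolding t_def by auto
  have "b s = b x + d" using s(2) td by (simp add: algebra_simps)
  moreover have "b s' = b y - d" using s'(2) td by (simp add: algebra_simps)
  moreover have "l s + l s' \<le> l x + l y" using s(3) s'(3) by (simp add: algebra_simps)
  ultimately show ?thesis using s(1) s'(1) by blast
qed

locale lexopt =
  fixes b1 b2 l1 l2 :: "real \<Rightarrow> real"
  assumes cb1: "continuous_on {0..1} b1" and cb2: "continuous_on {0..1} b2"
    and cl1: "continuous_on {0..1} l1" and cl2: "continuous_on {0..1} l2"
    and anti1: "\<And>x y. x \<in> {0..1} \<Longrightarrow> y \<in> {0..1} \<Longrightarrow> x \<le> y \<Longrightarrow> b1 y \<le> b1 x"
    and anti2: "\<And>x y. x \<in> {0..1} \<Longrightarrow> y \<in> {0..1} \<Longrightarrow> x \<le> y \<Longrightarrow> b2 y \<le> b2 x"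
    and conv1: "gconv b1 l1" and conv2: "gconv b2 l2"
    and uniq1: "\<And>x y. x \<in> {0..1} \<Longrightarrow> y \<in> {0..1} \<Longrightarrow> b1 x = b1 y \<Longrightarrow> l1 x = l1 y \<Longrightarrow> x = y"
    and uniq2: "\<And>x y. x \<in> {0..1} \<Longrightarrow> y \<in> {0..1} \<Longrightarrow> b2 x = b2 y \<Longrightarrow> l2 x = l2 y \<Longrightarrow> x = y"
    and zero: "b1 0 = b2 0"
begin

definition B :: "real \<times> real \<Rightarrow> real" where "B \<tau> = b1 (fst \<tau>) - b2 (snd \<tau>)"
definition L :: "real \<times> real \<Rightarrow> real" where "L \<tau> = l1 (fst \<tau>) + l2 (snd \<tau>)"
definition F :: "real \<Rightarrow> (real \<times> real) set" where
  "F \<beta> = {\<tau>. fst \<tau> \<in> {0..1} \<and> snd \<tau> \<in> {0..1} \<and> \<bar>B \<tau>\<bar> \<le> \<beta>}"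
definition A1 where "A1 \<beta> = argmin_on L (F \<beta>)"
definition A2 where "A2 \<beta> = argmin_on (\<lambda>\<tau>. \<bar>B \<tau>\<bar>) (A1 \<beta>)"
definition A3 where "A3 \<beta> = argmin_on fst (A2 \<beta>)"
definition A4 where "A4 \<beta> = argmin_on snd (A3 \<beta>)"
definition sel where "sel \<beta> = (THE \<tau>. \<tau> \<in> A4 \<beta>)"

abbreviation box where "box \<equiv> {0..1::real} \<times> {0..1::real}"

lemma F_alt: "F \<beta> = (box \<inter> B -` {..\<beta>}) \<inter> (box \<inter> B -` {-\<beta>..})"
  unfolding F_def by (auto simp: mem_Times_iff abs_le_iff)

lemma contB: "continuous_on box B"
proof -
  have "continuous_on box (\<lambda>\<tau>. b1 (fst \<tau>))"
    by (rule continuous_on_compose2[OF cb1]) (auto intro: continuous_intros)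
  moreover have "continuous_on box (\<lambda>\<tau>. b2 (snd \<tau>))"
    by (rule continuous_on_compose2[OF cb2]) (auto intro: continuous_intros)
  ultimately show ?thesis unfolding B_def by (intro continuous_intros)
qed

lemma contL: "continuous_on box L"
proof -
  have "continuous_on box (\<lambda>\<tau>. l1 (fst \<tau>))"
    by (rule continuous_on_compose2[OF cl1]) (auto intro: continuous_intros)
  moreover have "continuous_on box (\<lambda>\<tau>. l2 (snd \<tau>))"
    by (rule continuous_on_compose2[OF cl2]) (auto intro: continuous_intros)
  ultimately show ?thesis unfolding L_def by (intro continuous_intros)
qed

lemma F_box: "F \<beta> \<subseteq> box" unfolding F_def by (auto simp: mem_Times_iff)

lemma compact_F: "compact (F \<beta>)"
proof -
  have cb: "compact box" by (intro compact_Times compact_Icc)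
  have "closed (box \<inter> B -` {..\<beta>})"
    by (rule continuous_closed_preimage[OF contB compact_imp_closed[OF cb]]) auto
  hence "closed ((box \<inter> B -` {..\<beta>}) \<inter> (box \<inter> B -` {-\<beta>..}))"
    using continuous_closed_preimage[OF contB compact_imp_closed[OF cb], of "{-\<beta>..}"]
    by (metis closed_Int closed_atLeast)
  hence "closed (F \<beta>)" by (subst F_alt) assumption
  moreover have "F \<beta> \<subseteq> box" by (rule F_box)
  ultimately show ?thesis using cb compact_Int_closed by (metis inf.absorb_iff2)
qed

lemma F_ne: "0 \<le> \<beta> \<Longrightarrow> (0,0) \<in> F \<beta>"
  unfolding F_def B_def using zero by auto

lemma A4_props:
  assumes "0 \<le> \<beta>"
  shows "A4 \<beta> = {sel \<beta>}"
proof -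
  have ne0: "F \<beta> \<noteq> {}" using F_ne[OF assms] by auto
  have c1: "compact (A1 \<beta>) \<and> A1 \<beta> \<noteq> {}" unfolding A1_def
    by (rule argmin_nonempty_compact[OF compact_F ne0 continuous_on_subset[OF contL F_box]])
  have s1: "A1 \<beta> \<subseteq> box" using F_box[of \<beta>] argmin_subset[of L "F \<beta>"] unfolding A1_def by (rule subset_trans[rotated])
  have "continuous_on (A1 \<beta>) (\<lambda>\<tau>. \<bar>B \<tau>\<bar>)"
    using continuous_on_rabs[OF continuous_on_subset[OF contB s1]] .
  hence c2: "compact (A2 \<beta>) \<and> A2 \<beta> \<noteq> {}" unfolding A2_def
    using argmin_nonempty_compact[of "A1 \<beta>"] c1 by simp
  have "continuous_on (A2 \<beta>) fst" using continuous_on_fst[OF continuous_on_id] by simp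
  hence c3: "compact (A3 \<beta>) \<and> A3 \<beta> \<noteq> {}" unfolding A3_def
    using argmin_nonempty_compact[of "A2 \<beta>"] c2 by simp
  have "continuous_on (A3 \<beta>) snd" using continuous_on_snd[OF continuous_on_id] by simp
  hence c4: "A4 \<beta> \<noteq> {}" unfolding A4_def
    using argmin_nonempty_compact[of "A3 \<beta>"] c3 by simp
  have un: "x = y" if "x \<in> A4 \<beta>" "y \<in> A4 \<beta>" for x y
  proof -
    have "fst x = fst y" using that unfolding A4_def A3_def argmin_on_def
      by (auto intro: order_antisym)
    moreover have "snd x = snd y" using that unfolding A4_def argmin_on_def
      by (auto intro: order_antisym)
    ultimately show ?thesis by (simp add: prod_eq_iff)
  qed
  then obtain x where x: "x \<in> A4 \<beta>" using c4 by blast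
  have "sel \<beta> = x" unfolding sel_def using x un by blast
  then show ?thesis using x un by blast
qed

lemma sel_A4: "0 \<le> \<beta> \<Longrightarrow> sel \<beta> \<in> A4 \<beta>" using A4_props by auto

lemma sel_F: "0 \<le> \<beta> \<Longrightarrow> sel \<beta> \<in> F \<beta>"
  using sel_A4 unfolding A4_def A3_def A2_def A1_def argmin_on_def by auto

lemma sel_L: "0 \<le> \<beta> \<Longrightarrow> Y \<in> F \<beta> \<Longrightarrow> L (sel \<beta>) \<le> L Y"
  using sel_A4 unfolding A4_def A3_def A2_def A1_def argmin_on_def by auto

lemma in_A1: "0 \<le> \<beta> \<Longrightarrow> Y \<in> F \<beta> \<Longrightarrow> L Y \<le> L (sel \<beta>) \<Longrightarrow> Y \<in> A1 \<beta>"
  unfolding A1_def argmin_on_def using sel_L[of \<beta>] by (auto intro: order_trans)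

lemma sel_B: "0 \<le> \<beta> \<Longrightarrow> Y \<in> F \<beta> \<Longrightarrow> L Y \<le> L (sel \<beta>) \<Longrightarrow> \<bar>B (sel \<beta>)\<bar> \<le> \<bar>B Y\<bar>"
  using sel_A4 in_A1 unfolding A4_def A3_def A2_def argmin_on_def by auto

lemma sel_fst: "0 \<le> \<beta> \<Longrightarrow> Y \<in> F \<beta> \<Longrightarrow> L Y \<le> L (sel \<beta>) \<Longrightarrow> \<bar>B Y\<bar> \<le> \<bar>B (sel \<beta>)\<bar>
   \<Longrightarrow> fst (sel \<beta>) \<le> fst Y"
proof -
  assume a: "0 \<le> \<beta>" "Y \<in> F \<beta>" "L Y \<le> L (sel \<beta>)" "\<bar>B Y\<bar> \<le> \<bar>B (sel \<beta>)\<bar>"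
  have y1: "Y \<in> A1 \<beta>" using in_A1 a by auto
  have "sel \<beta> \<in> A2 \<beta>" using sel_A4[OF a(1)] unfolding A4_def A3_def argmin_on_def by auto
  hence "Y \<in> A2 \<beta>" using y1 a(4) unfolding A2_def argmin_on_def by (auto intro: order_trans)
  thus ?thesis using sel_A4[OF a(1)] unfolding A4_def A3_def argmin_on_def by auto
qed

lemma F_mono: "\<beta> \<le> \<beta>' \<Longrightarrow> F \<beta> \<subseteq> F \<beta>'"
  unfolding F_def by auto

lemma sel_box: "0 \<le> \<beta> \<Longrightarrow> fst (sel \<beta>) \<in> {0..1} \<and> snd (sel \<beta>) \<in> {0..1}"
  using sel_F unfolding F_def by auto

lemma MIX:
  assumes "fst X \<in> {0..1}" "snd X \<in> {0..1}" "fst Y \<in> {0..1}" "snd Y \<in> {0..1}" "t \<in> {0..1}"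
  shows "\<exists>Z. fst Z \<in> {0..1} \<and> snd Z \<in> {0..1} \<and> B Z = (1-t) * B X + t * B Y
     \<and> L Z \<le> (1-t) * L X + t * L Y"
proof -
  obtain s1 where s1: "s1 \<in> {0..1}" "b1 s1 = (1-t)*b1 (fst X) + t*b1 (fst Y)"
     "l1 s1 \<le> (1-t)*l1 (fst X) + t*l1 (fst Y)"
    using conv1 assms unfolding gconv_def by blast
  obtain s2 where s2: "s2 \<in> {0..1}" "b2 s2 = (1-t)*b2 (snd X) + t*b2 (snd Y)"
     "l2 s2 \<le> (1-t)*l2 (snd X) + t*l2 (snd Y)"
    using conv2 assms unfolding gconv_def by blast
  have "B (s1,s2) = (1-t) * B X + t * B Y" unfolding B_def using s1 s2 by (simp add: algebra_simps)
  moreover have "L (s1,s2) \<le> (1-t) * L X + t * L Y" unfolding L_def using s1 s2 by (simp add: algebra_simps)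
  ultimately show ?thesis using s1 s2 by (intro exI[of _ "(s1,s2)"]) auto
qed

lemma GM:
  assumes "0 \<le> \<beta>" "\<bar>B (sel \<beta>)\<bar> < \<beta>" "fst Y \<in> {0..1}" "snd Y \<in> {0..1}"
  shows "L (sel \<beta>) \<le> L Y"
proof (rule ccontr)
  define X where "X = sel \<beta>"
  assume "\<not> L (sel \<beta>) \<le> L Y"
  hence lt: "L Y < L X" unfolding X_def by auto
  have xb: "fst X \<in> {0..1}" "snd X \<in> {0..1}" using sel_box[OF assms(1)] unfolding X_def by auto
  define t where "t = (\<beta> - \<bar>B X\<bar>) / (\<bar>B X\<bar> + \<bar>B Y\<bar> + \<beta>)"
  have bx: "\<bar>B X\<bar> < \<beta>" using assms(2) unfolding X_def .
  have den: "\<bar>B X\<bar> + \<bar>B Y\<bar> + \<beta> > 0" using bx by linarith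
  have t0: "t > 0" unfolding t_def using bx den by auto
  have t1: "t \<le> 1" unfolding t_def using den bx by (simp add: divide_le_eq_1)
  have tm: "t * (\<bar>B X\<bar> + \<bar>B Y\<bar> + \<beta>) = \<beta> - \<bar>B X\<bar>" unfolding t_def using den by simp
  obtain Z where Z: "fst Z \<in> {0..1}" "snd Z \<in> {0..1}" "B Z = (1-t) * B X + t * B Y"
     "L Z \<le> (1-t) * L X + t * L Y"
    using MIX[OF xb assms(3,4), of t] t0 t1 by (meson atLeastAtMost_iff less_eq_real_def)
  have a1: "\<bar>(1-t) * B X\<bar> = (1-t) * \<bar>B X\<bar>" using t1 by (simp add: abs_mult)
  have a2: "\<bar>t * B Y\<bar> = t * \<bar>B Y\<bar>" using t0 by (simp add: abs_mult)
  have "\<bar>B Z\<bar> \<le> (1-t) * \<bar>B X\<bar> + t * \<bar>B Y\<bar>"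
    unfolding Z(3) using abs_triangle_ineq[of "(1-t) * B X" "t * B Y"] a1 a2 by linarith
  also have "\<dots> \<le> \<beta>"
  proof -
    have p1: "t * \<bar>B X\<bar> \<ge> 0" "t * \<beta> \<ge> 0" using t0 assms(1) by auto
    have "t * \<bar>B X\<bar> + t * \<bar>B Y\<bar> + t * \<beta> = \<beta> - \<bar>B X\<bar>" using tm by (simp add: distrib_left)
    hence "t * \<bar>B Y\<bar> \<le> \<beta> - \<bar>B X\<bar>" using p1 by linarith
    moreover have "(1-t) * \<bar>B X\<bar> \<le> \<bar>B X\<bar>" using t0 by (simp add: algebra_simps)
    ultimately show ?thesis by linarith
  qed
  finally have "Z \<in> F \<beta>" unfolding F_def using Z by auto
  hence "L X \<le> L Z" using sel_L[OF assms(1)] unfolding X_def by auto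
  moreover have "(1-t) * L X + t * L Y < L X"
  proof -
    have "t * (L Y - L X) < 0" using t0 lt by (simp add: mult_pos_neg)
    thus ?thesis by (simp add: algebra_simps)
  qed
  ultimately show False using Z(4) by linarith
qed

lemma M1:
  assumes "0 \<le> \<beta>" "\<beta> \<le> \<beta>'" "sel \<beta>' \<in> F \<beta>"
  shows "sel \<beta> = sel \<beta>'"
proof -
  define Y where "Y = sel \<beta>'"
  have b': "0 \<le> \<beta>'" using assms by auto
  have Y4: "Y \<in> A4 \<beta>'" using sel_A4[OF b'] unfolding Y_def .
  have Y3: "Y \<in> A3 \<beta>'" using Y4 unfolding A4_def argmin_on_def by auto
  have Y2: "Y \<in> A2 \<beta>'" using Y3 unfolding A3_def argmin_on_def by auto
  have Y1: "Y \<in> A1 \<beta>'" using Y2 unfolding A2_def argmin_on_def by auto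
  have YF: "Y \<in> F \<beta>" using assms(3) unfolding Y_def .
  have e1: "A1 \<beta> = A1 \<beta>' \<inter> F \<beta>"
    unfolding A1_def by (rule argmin_sub[OF F_mono[OF assms(2)] Y1[unfolded A1_def] YF])
  have e2: "A2 \<beta> = A2 \<beta>' \<inter> (A1 \<beta>' \<inter> F \<beta>)"
    unfolding A2_def e1 by (rule argmin_sub[OF Int_lower1 Y2[unfolded A2_def]]) (use Y1 YF in blast)
  have e3: "A3 \<beta> = A3 \<beta>' \<inter> (A2 \<beta>' \<inter> (A1 \<beta>' \<inter> F \<beta>))"
    unfolding A3_def e2 by (rule argmin_sub[OF Int_lower1 Y3[unfolded A3_def]]) (use Y1 Y2 YF in blast)
  have e4: "A4 \<beta> = A4 \<beta>' \<inter> (A3 \<beta>' \<inter> (A2 \<beta>' \<inter> (A1 \<beta>' \<inter> F \<beta>)))"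
    unfolding A4_def e3 by (rule argmin_sub[OF Int_lower1 Y4[unfolded A4_def]]) (use Y1 Y2 Y3 YF in blast)
  have "Y \<in> A4 \<beta>" unfolding e4 using Y1 Y2 Y3 Y4 YF by auto
  thus ?thesis using A4_props[OF assms(1)] unfolding Y_def by auto
qed

lemma M2:
  assumes "0 \<le> \<beta>" "\<beta> \<le> \<beta>'" "\<bar>B (sel \<beta>)\<bar> < \<beta>"
  shows "sel \<beta>' = sel \<beta>"
proof -
  define X where "X = sel \<beta>"
  define Y where "Y = sel \<beta>'"
  have b': "0 \<le> \<beta>'" using assms by auto
  have XF: "X \<in> F \<beta>'" using F_mono[OF assms(2)] sel_F[OF assms(1)] unfolding X_def by auto
  have YF: "Y \<in> F \<beta>'" using sel_F[OF b'] unfolding Y_def .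
  have "L X \<le> L Y" using GM[OF assms(1,3)] YF unfolding F_def X_def by auto
  hence "\<bar>B Y\<bar> \<le> \<bar>B X\<bar>" using sel_B[OF b' XF] unfolding Y_def by auto
  hence "Y \<in> F \<beta>" using YF assms(3) unfolding F_def X_def by auto
  thus ?thesis using M1[OF assms(1,2)] unfolding Y_def X_def by auto
qed

lemma M3:
  assumes "0 < \<beta>" "\<beta> < \<beta>'" "sel \<beta> \<noteq> sel \<beta>'"
  shows "\<bar>B (sel \<beta>)\<bar> = \<beta> \<and> \<beta> < \<bar>B (sel \<beta>')\<bar> \<and> L (sel \<beta>') < L (sel \<beta>)"
proof -
  define X where "X = sel \<beta>"
  define Y where "Y = sel \<beta>'"
  have b: "0 \<le> \<beta>" "0 \<le> \<beta>'" "\<beta> \<le> \<beta>'" using assms by auto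
  have XF: "X \<in> F \<beta>" using sel_F[OF b(1)] unfolding X_def .
  have XF': "X \<in> F \<beta>'" using F_mono[OF b(3)] XF by auto
  have YF: "Y \<in> F \<beta>'" using sel_F[OF b(2)] unfolding Y_def .
  have 1: "\<bar>B X\<bar> = \<beta>"
  proof (rule ccontr)
    assume "\<bar>B X\<bar> \<noteq> \<beta>"
    hence "\<bar>B X\<bar> < \<beta>" using XF unfolding F_def by auto
    thus False using M2[OF b(1,3)] assms(3) unfolding X_def by auto
  qed
  have 2: "\<beta> < \<bar>B Y\<bar>"
  proof (rule ccontr)
    assume "\<not> \<beta> < \<bar>B Y\<bar>"
    hence "Y \<in> F \<beta>" using YF unfolding F_def by auto
    thus False using M1[OF b(1,3)] assms(3) unfolding X_def Y_def by auto
  qed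
  have le: "L Y \<le> L X" using sel_L[OF b(2) XF'] unfolding Y_def .
  have 3: "L Y < L X"
  proof (rule ccontr)
    assume "\<not> L Y < L X"
    hence "L X \<le> L Y" by auto
    hence "\<bar>B Y\<bar> \<le> \<bar>B X\<bar>" using sel_B[OF b(2) XF'] unfolding Y_def by auto
    thus False using 1 2 by auto
  qed
  show ?thesis using 1 2 3 unfolding X_def Y_def by auto
qed

lemma M4:
  assumes "0 < \<beta>" "\<beta> < \<beta>'" "sel \<beta> \<noteq> sel \<beta>'"
  shows "0 < B (sel \<beta>) * B (sel \<beta>')"
proof (rule ccontr)
  define X where "X = sel \<beta>"
  define Y where "Y = sel \<beta>'"
  have b: "0 \<le> \<beta>" "0 \<le> \<beta>'" using assms by auto
  have m3: "\<bar>B X\<bar> = \<beta>" "\<beta> < \<bar>B Y\<bar>" "L Y < L X" using M3[OF assms] unfolding X_def Y_def by auto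
  assume "\<not> 0 < B (sel \<beta>) * B (sel \<beta>')"
  hence neg: "B X * B Y < 0" using m3 assms(1) unfolding X_def Y_def
    by (metis abs_zero less_eq_real_def linorder_neqE_linordered_idom mult_eq_0_iff not_less)
  define t where "t = B X / (B X - B Y)"
  have t0: "0 < t" and t1: "t < 1" and tm: "t * (B X - B Y) = B X"
    using neg unfolding t_def by (auto simp: mult_less_0_iff divide_less_eq field_simps)
  have xb: "fst X \<in> {0..1}" "snd X \<in> {0..1}" using sel_box[OF b(1)] unfolding X_def by auto
  have yb: "fst Y \<in> {0..1}" "snd Y \<in> {0..1}" using sel_box[OF b(2)] unfolding Y_def by auto
  obtain Z where Z: "fst Z \<in> {0..1}" "snd Z \<in> {0..1}" "B Z = (1-t) * B X + t * B Y"
     "L Z \<le> (1-t) * L X + t * L Y"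
    using MIX[OF xb yb, of t] t0 t1 by (meson atLeastAtMost_iff less_eq_real_def)
  have "B Z = 0" unfolding Z(3) using tm by (simp add: algebra_simps)
  hence "Z \<in> F \<beta>" unfolding F_def using Z b by auto
  hence "L X \<le> L Z" using sel_L[OF b(1)] unfolding X_def by auto
  moreover have "(1-t) * L X + t * L Y < L X"
  proof -
    have "t * (L Y - L X) < 0" using t0 m3 by (simp add: mult_pos_neg)
    thus ?thesis by (simp add: algebra_simps)
  qed
  ultimately show False using Z(4) by linarith
qed

lemma anti1_strict: "x \<in> {0..1} \<Longrightarrow> y \<in> {0..1} \<Longrightarrow> b1 x < b1 y \<Longrightarrow> y < x"
  using anti1[of x y] by (meson not_le)
lemma anti2_strict: "x \<in> {0..1} \<Longrightarrow> y \<in> {0..1} \<Longrightarrow> b2 x < b2 y \<Longrightarrow> y < x"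
  using anti2[of x y] by (meson not_le)

lemma M5:
  assumes "0 < \<beta>" "\<beta> < \<beta>'" "sel \<beta> \<noteq> sel \<beta>'"
  shows "(0 < B (sel \<beta>) \<longrightarrow> b1 (fst (sel \<beta>)) \<le> b1 (fst (sel \<beta>')) \<and> b2 (snd (sel \<beta>')) \<le> b2 (snd (sel \<beta>)))
       \<and> (B (sel \<beta>) < 0 \<longrightarrow> b1 (fst (sel \<beta>')) \<le> b1 (fst (sel \<beta>)) \<and> b2 (snd (sel \<beta>)) \<le> b2 (snd (sel \<beta>')))"
proof -
  define X where "X = sel \<beta>"
  define Y where "Y = sel \<beta>'"
  have b: "0 \<le> \<beta>" "0 \<le> \<beta>'" using assms by auto
  have m3: "\<bar>B X\<bar> = \<beta>" "\<beta> < \<bar>B Y\<bar>" "L Y < L X" using M3[OF assms] unfolding X_def Y_def by auto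
  have m4: "0 < B X * B Y" using M4[OF assms] unfolding X_def Y_def .
  have xb: "fst X \<in> {0..1}" "snd X \<in> {0..1}" using sel_box[OF b(1)] unfolding X_def by auto
  have yb: "fst Y \<in> {0..1}" "snd Y \<in> {0..1}" using sel_box[OF b(2)] unfolding Y_def by auto
  have YF: "Y \<in> F \<beta>'" using sel_F[OF b(2)] unfolding Y_def .
  have BY: "\<bar>B Y\<bar> \<le> \<beta>'" using YF unfolding F_def by auto
  have LX: "\<And>Z. Z \<in> F \<beta> \<Longrightarrow> L X \<le> L Z" using sel_L[OF b(1)] unfolding X_def by auto
  have LY: "\<And>Z. Z \<in> F \<beta>' \<Longrightarrow> L Y \<le> L Z" using sel_L[OF b(2)] unfolding Y_def by auto
  have FX: "\<And>Z. Z \<in> F \<beta> \<Longrightarrow> L Z \<le> L X \<Longrightarrow> \<bar>B Z\<bar> \<le> \<bar>B X\<bar> \<Longrightarrow> fst X \<le> fst Z"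
    using sel_fst[OF b(1)] unfolding X_def by auto
  have FY: "\<And>Z. Z \<in> F \<beta>' \<Longrightarrow> L Z \<le> L Y \<Longrightarrow> \<bar>B Z\<bar> \<le> \<bar>B Y\<bar> \<Longrightarrow> fst Y \<le> fst Z"
    using sel_fst[OF b(2)] unfolding Y_def by auto
  have pos: "b1 (fst X) \<le> b1 (fst Y) \<and> b2 (snd Y) \<le> b2 (snd X)" if bx: "0 < B X"
  proof -
    have by0: "0 < B Y" using m4 bx by (simp add: zero_less_mult_iff)
    have BXe: "B X = \<beta>" using m3 bx by auto
    have BYe: "B Y = \<bar>B Y\<bar>" using by0 by auto
    have A: "b2 (snd Y) \<le> b2 (snd X)"
    proof (rule ccontr)
      assume "\<not> b2 (snd Y) \<le> b2 (snd X)"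
      define d where "d = b2 (snd Y) - b2 (snd X)"
      have d0: "0 \<le> d" "0 < d" using \<open>\<not> b2 (snd Y) \<le> b2 (snd X)\<close> unfolding d_def by auto
      have dl: "d \<le> b1 (fst Y) - b1 (fst X)" using m3 BXe BYe unfolding d_def B_def by linarith
      obtain s s' where ss: "s \<in> {0..1}" "s' \<in> {0..1}" "b1 s = b1 (fst X) + d" "b1 s' = b1 (fst Y) - d"
        "l1 s + l1 s' \<le> l1 (fst X) + l1 (fst Y)"
        using gconv_pair[OF conv1 xb(1) yb(1) d0(1) dl] by blast
      define X2 where "X2 = (s, snd Y)"
      define Y2 where "Y2 = (s', snd X)"
      have bX2: "B X2 = B X" unfolding X2_def B_def using ss(3) d_def by simp
      have bY2: "B Y2 = B Y" unfolding Y2_def B_def using ss(4) d_def by simp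
      have X2F: "X2 \<in> F \<beta>" using bX2 m3 ss yb unfolding F_def X2_def by auto
      have Y2F: "Y2 \<in> F \<beta>'" using bY2 BY ss xb unfolding F_def Y2_def by auto
      have sum: "L X2 + L Y2 \<le> L X + L Y" using ss(5) unfolding L_def X2_def Y2_def by simp
      have "L X2 \<le> L X" using sum LY[OF Y2F] by linarith
      hence "fst X \<le> s" using FX[OF X2F] bX2 unfolding X2_def by auto
      moreover have "s < fst X" using anti1_strict[OF xb(1) ss(1)] ss(3) d0 by auto
      ultimately show False by auto
    qed
    have Bp: "b1 (fst X) \<le> b1 (fst Y)"
    proof (rule ccontr)
      assume "\<not> b1 (fst X) \<le> b1 (fst Y)"
      define d where "d = b1 (fst X) - b1 (fst Y)"
      have d0: "0 \<le> d" "0 < d" using \<open>\<not> b1 (fst X) \<le> b1 (fst Y)\<close> unfolding d_def by auto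
      have dl: "d \<le> b2 (snd X) - b2 (snd Y)" using m3 BXe BYe unfolding d_def B_def by linarith
      obtain s s' where ss: "s \<in> {0..1}" "s' \<in> {0..1}" "b2 s = b2 (snd Y) + d" "b2 s' = b2 (snd X) - d"
        "l2 s + l2 s' \<le> l2 (snd Y) + l2 (snd X)"
        using gconv_pair[OF conv2 yb(2) xb(2) d0(1) dl] by blast
      define X2 where "X2 = (fst Y, s')"
      define Y2 where "Y2 = (fst X, s)"
      have bX2: "B X2 = B X" unfolding X2_def B_def using ss(4) d_def by simp
      have bY2: "B Y2 = B Y" unfolding Y2_def B_def using ss(3) d_def by simp
      have X2F: "X2 \<in> F \<beta>" using bX2 m3 ss yb unfolding F_def X2_def by auto
      have Y2F: "Y2 \<in> F \<beta>'" using bY2 BY ss xb unfolding F_def Y2_def by auto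
      have sum: "L X2 + L Y2 \<le> L X + L Y" using ss(5) unfolding L_def X2_def Y2_def by simp
      have "L Y2 \<le> L Y" using sum LX[OF X2F] by linarith
      hence "fst Y \<le> fst X" using FY[OF Y2F] bY2 unfolding Y2_def by auto
      moreover have "fst X < fst Y" using anti1_strict[OF yb(1) xb(1)] d0 unfolding d_def by auto
      ultimately show False by auto
    qed
    show ?thesis using A Bp by auto
  qed
  have neg: "b1 (fst Y) \<le> b1 (fst X) \<and> b2 (snd X) \<le> b2 (snd Y)" if bx: "B X < 0"
  proof -
    have by0: "B Y < 0" using m4 bx by (simp add: zero_less_mult_iff)
    have BXe: "B X = - \<beta>" using m3 bx by auto
    have BYe: "B Y = - \<bar>B Y\<bar>" using by0 by auto
    have A: "b1 (fst Y) \<le> b1 (fst X)"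
    proof (rule ccontr)
      assume "\<not> b1 (fst Y) \<le> b1 (fst X)"
      define d where "d = b1 (fst Y) - b1 (fst X)"
      have d0: "0 \<le> d" "0 < d" using \<open>\<not> b1 (fst Y) \<le> b1 (fst X)\<close> unfolding d_def by auto
      have dl: "d \<le> b2 (snd Y) - b2 (snd X)" using m3 BXe BYe unfolding d_def B_def by linarith
      obtain s s' where ss: "s \<in> {0..1}" "s' \<in> {0..1}" "b2 s = b2 (snd X) + d" "b2 s' = b2 (snd Y) - d"
        "l2 s + l2 s' \<le> l2 (snd X) + l2 (snd Y)"
        using gconv_pair[OF conv2 xb(2) yb(2) d0(1) dl] by blast
      define X2 where "X2 = (fst Y, s)"
      define Y2 where "Y2 = (fst X, s')"
      have bX2: "B X2 = B X" unfolding X2_def B_def using ss(3) d_def by simp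
      have bY2: "B Y2 = B Y" unfolding Y2_def B_def using ss(4) d_def by simp
      have X2F: "X2 \<in> F \<beta>" using bX2 m3 ss yb unfolding F_def X2_def by auto
      have Y2F: "Y2 \<in> F \<beta>'" using bY2 BY ss xb unfolding F_def Y2_def by auto
      have sum: "L X2 + L Y2 \<le> L X + L Y" using ss(5) unfolding L_def X2_def Y2_def by simp
      have "L X2 \<le> L X" using sum LY[OF Y2F] by linarith
      hence "fst X \<le> fst Y" using FX[OF X2F] bX2 unfolding X2_def by auto
      moreover have "fst Y < fst X" using anti1_strict[OF xb(1) yb(1)] d0 unfolding d_def by auto
      ultimately show False by auto
    qed
    have Bp: "b2 (snd X) \<le> b2 (snd Y)"
    proof (rule ccontr)
      assume "\<not> b2 (snd X) \<le> b2 (snd Y)"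
      define d where "d = b2 (snd X) - b2 (snd Y)"
      have d0: "0 \<le> d" "0 < d" using \<open>\<not> b2 (snd X) \<le> b2 (snd Y)\<close> unfolding d_def by auto
      have dl: "d \<le> b1 (fst X) - b1 (fst Y)" using m3 BXe BYe unfolding d_def B_def by linarith
      obtain s s' where ss: "s \<in> {0..1}" "s' \<in> {0..1}" "b1 s = b1 (fst Y) + d" "b1 s' = b1 (fst X) - d"
        "l1 s + l1 s' \<le> l1 (fst Y) + l1 (fst X)"
        using gconv_pair[OF conv1 yb(1) xb(1) d0(1) dl] by blast
      define X2 where "X2 = (s', snd Y)"
      define Y2 where "Y2 = (s, snd X)"
      have bX2: "B X2 = B X" unfolding X2_def B_def using ss(4) d_def by simp
      have bY2: "B Y2 = B Y" unfolding Y2_def B_def using ss(3) d_def by simp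
      have X2F: "X2 \<in> F \<beta>" using bX2 m3 ss yb unfolding F_def X2_def by auto
      have Y2F: "Y2 \<in> F \<beta>'" using bY2 BY ss xb unfolding F_def Y2_def by auto
      have sum: "L X2 + L Y2 \<le> L X + L Y" using ss(5) unfolding L_def X2_def Y2_def by simp
      have "L Y2 \<le> L Y" using sum LX[OF X2F] by linarith
      hence "fst Y \<le> s" using FY[OF Y2F] bY2 unfolding Y2_def by auto
      moreover have "s < fst Y" using anti1_strict[OF yb(1) ss(1)] ss(3) d0 by auto
      ultimately show False by auto
    qed
    show ?thesis using A Bp by auto
  qed
  show ?thesis using pos neg unfolding X_def Y_def by auto
qed

lemma M6:
  assumes "0 \<le> \<beta>" "0 \<le> \<beta>'"
  shows "b1 (fst (sel \<beta>)) = b1 (fst (sel \<beta>')) \<Longrightarrow> fst (sel \<beta>) = fst (sel \<beta>')"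
    and "b2 (snd (sel \<beta>)) = b2 (snd (sel \<beta>')) \<Longrightarrow> snd (sel \<beta>) = snd (sel \<beta>')"
proof -
  define X where "X = sel \<beta>"
  define Y where "Y = sel \<beta>'"
  have xb: "fst X \<in> {0..1}" "snd X \<in> {0..1}" using sel_box[OF assms(1)] unfolding X_def by auto
  have yb: "fst Y \<in> {0..1}" "snd Y \<in> {0..1}" using sel_box[OF assms(2)] unfolding Y_def by auto
  have XF: "X \<in> F \<beta>" using sel_F[OF assms(1)] unfolding X_def .
  have YF: "Y \<in> F \<beta>'" using sel_F[OF assms(2)] unfolding Y_def .
  have LX: "\<And>Z. Z \<in> F \<beta> \<Longrightarrow> L X \<le> L Z" using sel_L[OF assms(1)] unfolding X_def by auto
  have LY: "\<And>Z. Z \<in> F \<beta>' \<Longrightarrow> L Y \<le> L Z" using sel_L[OF assms(2)] unfolding Y_def by auto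
  {
    assume e: "b1 (fst X) = b1 (fst Y)"
    have "(fst Y, snd X) \<in> F \<beta>" using XF e yb unfolding F_def B_def by auto
    hence 1: "l1 (fst X) \<le> l1 (fst Y)" using LX unfolding L_def by fastforce
    have "(fst X, snd Y) \<in> F \<beta>'" using YF e xb unfolding F_def B_def by auto
    hence 2: "l1 (fst Y) \<le> l1 (fst X)" using LY unfolding L_def by fastforce
    have "fst X = fst Y" using uniq1[OF xb(1) yb(1) e] 1 2 by auto
  }
  then show "b1 (fst (sel \<beta>)) = b1 (fst (sel \<beta>')) \<Longrightarrow> fst (sel \<beta>) = fst (sel \<beta>')"
    unfolding X_def Y_def by auto
  {
    assume e: "b2 (snd X) = b2 (snd Y)"
    have "(fst X, snd Y) \<in> F \<beta>" using XF e yb unfolding F_def B_def by auto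
    hence 1: "l2 (snd X) \<le> l2 (snd Y)" using LX unfolding L_def by fastforce
    have "(fst Y, snd X) \<in> F \<beta>'" using YF e xb unfolding F_def B_def by auto
    hence 2: "l2 (snd Y) \<le> l2 (snd X)" using LY unfolding L_def by fastforce
    have "snd X = snd Y" using uniq2[OF xb(2) yb(2) e] 1 2 by auto
  }
  then show "b2 (snd (sel \<beta>)) = b2 (snd (sel \<beta>')) \<Longrightarrow> snd (sel \<beta>) = snd (sel \<beta>')"
    unfolding X_def Y_def by auto
qed

lemma ORD:
  assumes "0 \<le> \<beta>" "0 \<le> \<beta>'"
  shows "b1 (fst (sel \<beta>)) \<le> b1 (fst (sel \<beta>')) \<Longrightarrow> fst (sel \<beta>') \<le> fst (sel \<beta>)"
    and "b2 (snd (sel \<beta>)) \<le> b2 (snd (sel \<beta>')) \<Longrightarrow> snd (sel \<beta>') \<le> snd (sel \<beta>)"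
proof -
  have xb: "fst (sel \<beta>) \<in> {0..1}" "snd (sel \<beta>) \<in> {0..1}" using sel_box[OF assms(1)] by auto
  have yb: "fst (sel \<beta>') \<in> {0..1}" "snd (sel \<beta>') \<in> {0..1}" using sel_box[OF assms(2)] by auto
  show "b1 (fst (sel \<beta>)) \<le> b1 (fst (sel \<beta>')) \<Longrightarrow> fst (sel \<beta>') \<le> fst (sel \<beta>)"
    using M6(1)[OF assms] anti1_strict[OF xb(1) yb(1)] by (cases "b1 (fst (sel \<beta>)) = b1 (fst (sel \<beta>'))") auto
  show "b2 (snd (sel \<beta>)) \<le> b2 (snd (sel \<beta>')) \<Longrightarrow> snd (sel \<beta>') \<le> snd (sel \<beta>)"
    using M6(2)[OF assms] anti2_strict[OF xb(2) yb(2)] by (cases "b2 (snd (sel \<beta>)) = b2 (snd (sel \<beta>'))") auto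
qed

theorem between:
  assumes "0 < \<beta>1" "\<beta>1 < \<beta>2" "\<beta>2 < \<beta>3"
  shows "(fst (sel \<beta>1) \<le> fst (sel \<beta>2) \<and> fst (sel \<beta>2) \<le> fst (sel \<beta>3)) \<or>
         (fst (sel \<beta>1) \<ge> fst (sel \<beta>2) \<and> fst (sel \<beta>2) \<ge> fst (sel \<beta>3))"
    and "(snd (sel \<beta>1) \<le> snd (sel \<beta>2) \<and> snd (sel \<beta>2) \<le> snd (sel \<beta>3)) \<or>
         (snd (sel \<beta>1) \<ge> snd (sel \<beta>2) \<and> snd (sel \<beta>2) \<ge> snd (sel \<beta>3))"
proof -
  have b: "0 \<le> \<beta>1" "0 \<le> \<beta>2" "0 \<le> \<beta>3" "0 < \<beta>2" using assms by auto
  have "((fst (sel \<beta>1) \<le> fst (sel \<beta>2) \<and> fst (sel \<beta>2) \<le> fst (sel \<beta>3)) \<or>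
         (fst (sel \<beta>1) \<ge> fst (sel \<beta>2) \<and> fst (sel \<beta>2) \<ge> fst (sel \<beta>3))) \<and>
        ((snd (sel \<beta>1) \<le> snd (sel \<beta>2) \<and> snd (sel \<beta>2) \<le> snd (sel \<beta>3)) \<or>
         (snd (sel \<beta>1) \<ge> snd (sel \<beta>2) \<and> snd (sel \<beta>2) \<ge> snd (sel \<beta>3)))"
  proof (cases "sel \<beta>1 = sel \<beta>2 \<or> sel \<beta>2 = sel \<beta>3")
    case True
    then show ?thesis by (auto simp: linorder_linear)
  next
    case False
    hence n12: "sel \<beta>1 \<noteq> sel \<beta>2" and n23: "sel \<beta>2 \<noteq> sel \<beta>3" by auto
    have m4: "0 < B (sel \<beta>1) * B (sel \<beta>2)" using M4[OF assms(1,2) n12] .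
    have m5a: "(0 < B (sel \<beta>1) \<longrightarrow> b1 (fst (sel \<beta>1)) \<le> b1 (fst (sel \<beta>2)) \<and> b2 (snd (sel \<beta>2)) \<le> b2 (snd (sel \<beta>1)))
       \<and> (B (sel \<beta>1) < 0 \<longrightarrow> b1 (fst (sel \<beta>2)) \<le> b1 (fst (sel \<beta>1)) \<and> b2 (snd (sel \<beta>1)) \<le> b2 (snd (sel \<beta>2)))"
      using M5[OF assms(1,2) n12] .
    have m5b: "(0 < B (sel \<beta>2) \<longrightarrow> b1 (fst (sel \<beta>2)) \<le> b1 (fst (sel \<beta>3)) \<and> b2 (snd (sel \<beta>3)) \<le> b2 (snd (sel \<beta>2)))
       \<and> (B (sel \<beta>2) < 0 \<longrightarrow> b1 (fst (sel \<beta>3)) \<le> b1 (fst (sel \<beta>2)) \<and> b2 (snd (sel \<beta>2)) \<le> b2 (snd (sel \<beta>3)))"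
      using M5[OF b(4) assms(3) n23] .
    show ?thesis
    proof (cases "0 < B (sel \<beta>1)")
      case True
      hence "0 < B (sel \<beta>2)" using m4 by (simp add: zero_less_mult_iff)
      then have "fst (sel \<beta>2) \<le> fst (sel \<beta>1)" "fst (sel \<beta>3) \<le> fst (sel \<beta>2)"
        "snd (sel \<beta>1) \<le> snd (sel \<beta>2)" "snd (sel \<beta>2) \<le> snd (sel \<beta>3)"
        using True m5a m5b ORD(1)[OF b(1) b(2)] ORD(1)[OF b(2) b(3)] ORD(2)[OF b(2) b(1)] ORD(2)[OF b(3) b(2)]
        by auto
      then show ?thesis by auto
    next
      case False
      hence "B (sel \<beta>1) < 0" using m4 by (cases "B (sel \<beta>1) = 0") auto
      hence "B (sel \<beta>2) < 0" using m4 by (simp add: zero_less_mult_iff)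
      then have "fst (sel \<beta>1) \<le> fst (sel \<beta>2)" "fst (sel \<beta>2) \<le> fst (sel \<beta>3)"
        "snd (sel \<beta>2) \<le> snd (sel \<beta>1)" "snd (sel \<beta>3) \<le> snd (sel \<beta>2)"
        using \<open>B (sel \<beta>1) < 0\<close> m5a m5b ORD(1)[OF b(2) b(1)] ORD(1)[OF b(3) b(2)] ORD(2)[OF b(1) b(2)] ORD(2)[OF b(2) b(3)]
        by auto
      then show ?thesis by auto
    qed
  qed
  thus "(fst (sel \<beta>1) \<le> fst (sel \<beta>2) \<and> fst (sel \<beta>2) \<le> fst (sel \<beta>3)) \<or>
         (fst (sel \<beta>1) \<ge> fst (sel \<beta>2) \<and> fst (sel \<beta>2) \<ge> fst (sel \<beta>3))"
    and "(snd (sel \<beta>1) \<le> snd (sel \<beta>2) \<and> snd (sel \<beta>2) \<le> snd (sel \<beta>3)) \<or>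
         (snd (sel \<beta>1) \<ge> snd (sel \<beta>2) \<and> snd (sel \<beta>2) \<ge> snd (sel \<beta>3))" by auto
qed

end

lemma thr_bounds: "0 \<le> p \<Longrightarrow> p \<le> 1 \<Longrightarrow> 0 \<le> thr_clf t p s \<and> thr_clf t p s \<le> 1"
  unfolding thr_clf_def by auto

lemma thr_pointwise:
  assumes "0 \<le> p" "p \<le> 1" "0 \<le> p'" "p' \<le> 1" "thr_clf t p s0 < thr_clf t' p' s0"
  shows "thr_clf t p s \<le> thr_clf t' p' s"
proof -
  have a: "s0 \<le> t" using assms unfolding thr_clf_def by (auto split: if_splits)
  have b: "t' \<le> s0" using assms unfolding thr_clf_def by (auto split: if_splits)
  show ?thesis
  proof (cases "t < s")
    case True then show ?thesis using a b unfolding thr_clf_def by auto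
  next
    case False
    show ?thesis
    proof (cases "s = t")
      case True
      show ?thesis
      proof (cases "t' < t")
        case True then show ?thesis using \<open>s = t\<close> assms unfolding thr_clf_def by auto
      next
        case False
        hence "t' = t" "s0 = t" using a b by auto
        then show ?thesis using \<open>s = t\<close> assms unfolding thr_clf_def by (auto split: if_splits)
      qed
    next
      case False
      then show ?thesis using \<open>\<not> t < s\<close> assms unfolding thr_clf_def by auto
    qed
  qed
qed

lemma sum_if_card:
  assumes "finite A"
  shows "(\<Sum>i\<in>A. if P i then (v::real) else 0) = v * real (card {i\<in>A. P i})"
proof -
  have "(\<Sum>i\<in>A. if P i then v else 0) = (\<Sum>i\<in>{i\<in>A. P i}. v)"
    using sum.inter_filter[OF assms, of "\<lambda>_. v" P] by simp
  also have "\<dots> = v * real (card {i\<in>A. P i})" by simp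
  finally show ?thesis .
qed

locale setting =
  fixes D :: "'x dataset" and c :: "nat \<Rightarrow> 'x \<Rightarrow> nat" and M :: "nat \<Rightarrow> nat" and k :: bias_kind
  assumes h1: "\<forall>i<length D. as_of D i \<in> {1, 2} \<and> ys_of D i \<in> {0, 1}"
    and h2: "\<forall>j\<in>{1, 2}. \<forall>x. c j x \<in> {1..M j}"
    and h3: "\<forall>j\<in>{1, 2}. \<forall>m\<in>{1..M j}. \<exists>i\<in>grp D j. c j (xs_of D i) = m"
    and h4: "k = EqOpp \<Longrightarrow> \<forall>j\<in>{1, 2}. \<exists>i\<in>grp D j. ys_of D i = 1"
begin

abbreviation G where "G a \<equiv> grp D a"
definition sc where "sc a i = score D c (xs_of D i) a"
definition S where "S a = sc a ` G a"
definition N where "N a = real (card (G a))"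
abbreviation H where "H a \<tau> \<equiv> norm_thr_clf D c a \<tau>"

lemma finG: "finite (G a)"
  unfolding grp_def by auto

lemma G_ne: "a \<in> {1,2} \<Longrightarrow> G a \<noteq> {}"
proof -
  assume a: "a \<in> {1,2}"
  have "c a undefined \<in> {1..M a}" using h2 a by auto
  hence "1 \<in> {1..M a}" by auto
  thus ?thesis using h3 a by blast
qed

lemma N_pos: "a \<in> {1,2} \<Longrightarrow> N a > 0"
  unfolding N_def using G_ne finG by (simp add: card_gt_0_iff)

lemma finS: "finite (S a)" unfolding S_def using finG by auto

lemma score_in_S: "a \<in> {1,2} \<Longrightarrow> score D c x a \<in> S a"
proof -
  assume a: "a \<in> {1,2}"
  have "c a x \<in> {1..M a}" using h2 a by auto
  then obtain i where i: "i \<in> G a" "c a (xs_of D i) = c a x" using h3 a by blast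
  have "score D c x a = sc a i" unfolding sc_def score_def using i by simp
  thus ?thesis unfolding S_def using i by auto
qed

lemma pos_rate_eq: "pos_rate D c a h = (\<Sum>i\<in>G a. h (sc a i)) / N a"
  unfolding pos_rate_def sc_def N_def by simp

lemma sum_thr:
  "(\<Sum>i\<in>G a. thr_clf t p (sc a i)) = real (card {i\<in>G a. t < sc a i}) + p * real (card {i\<in>G a. sc a i = t})"
proof -
  have "(\<Sum>i\<in>G a. thr_clf t p (sc a i)) = (\<Sum>i\<in>G a. (if t < sc a i then 1 else 0) + (if sc a i = t then p else 0))"
    unfolding thr_clf_def by (rule sum.cong) auto
  also have "\<dots> = (\<Sum>i\<in>G a. if t < sc a i then 1 else 0) + (\<Sum>i\<in>G a. if sc a i = t then p else 0)"
    by (rule sum.distrib)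
  also have "\<dots> = real (card {i\<in>G a. t < sc a i}) + p * real (card {i\<in>G a. sc a i = t})"
    using sum_if_card[OF finG] by simp
  finally show ?thesis .
qed

lemma exist_thr:
  assumes a: "a \<in> {1,2}" and tau: "\<tau> \<in> {0..1}"
  shows "\<exists>t p. t \<in> S a \<and> 0 \<le> p \<and> p \<le> 1 \<and> pos_rate D c a (thr_clf t p) = 1 - \<tau>"
proof -
  define q where "q = (1 - \<tau>) * N a"
  define cg where "cg s = real (card {i\<in>G a. s < sc a i})" for s
  define ce where "ce s = real (card {i\<in>G a. sc a i = s})" for s
  define T where "T = {s\<in>S a. cg s \<le> q}"
  have Sne: "S a \<noteq> {}" unfolding S_def using G_ne[OF a] by auto
  have q0: "0 \<le> q" unfolding q_def using tau N_pos[OF a] by auto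
  have qN: "q \<le> N a" unfolding q_def using tau N_pos[OF a] by (simp add: mult_le_cancel_right1)
  have "Max (S a) \<in> T"
  proof -
    have e0: "{i\<in>G a. Max (S a) < sc a i} = {}"
      using Max_ge[OF finS] unfolding S_def by fastforce
    have "cg (Max (S a)) = 0" unfolding cg_def e0 by simp
    thus ?thesis unfolding T_def using Max_in[OF finS Sne] q0 by simp
  qed
  hence Tne: "T \<noteq> {}" by auto
  have finT: "finite T" unfolding T_def using finS by auto
  define t where "t = Min T"
  have tT: "t \<in> T" unfolding t_def using Min_in[OF finT Tne] .
  hence tS: "t \<in> S a" and cgt: "cg t \<le> q" unfolding T_def by auto
  have ce_pos: "ce t \<ge> 1"
  proof -
    obtain i where "i \<in> G a" "sc a i = t" using tS unfolding S_def by auto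
    hence "{i\<in>G a. sc a i = t} \<noteq> {}" by auto
    hence "card {i\<in>G a. sc a i = t} \<ge> 1" using finG by (simp add: Suc_le_eq card_gt_0_iff)
    thus ?thesis unfolding ce_def by simp
  qed
  have split: "cg t + ce t = real (card {i\<in>G a. t \<le> sc a i})"
  proof -
    have "{i\<in>G a. t \<le> sc a i} = {i\<in>G a. t < sc a i} \<union> {i\<in>G a. sc a i = t}" by auto
    moreover have "{i\<in>G a. t < sc a i} \<inter> {i\<in>G a. sc a i = t} = {}" by auto
    ultimately have "card {i\<in>G a. t \<le> sc a i} = card {i\<in>G a. t < sc a i} + card {i\<in>G a. sc a i = t}"
      using finG by (simp add: card_Un_disjoint)
    thus ?thesis unfolding cg_def ce_def by simp
  qed
  have up: "q \<le> cg t + ce t"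
  proof (cases "\<exists>s\<in>S a. s < t")
    case True
    define L0 where "L0 = {s\<in>S a. s < t}"
    have L0ne: "L0 \<noteq> {}" "finite L0" unfolding L0_def using True finS by auto
    define t' where "t' = Max L0"
    have t'L: "t' \<in> L0" unfolding t'_def using Max_in[OF L0ne(2,1)] .
    hence t'S: "t' \<in> S a" and t'lt: "t' < t" unfolding L0_def by auto
    have "t' \<notin> T"
    proof
      assume "t' \<in> T"
      hence "t \<le> t'" unfolding t_def using Min_le[OF finT] by auto
      thus False using t'lt by auto
    qed
    hence "q < cg t'" using t'S unfolding T_def by auto
    moreover have "{i\<in>G a. t' < sc a i} \<subseteq> {i\<in>G a. t \<le> sc a i}"
    proof
      fix i assume i: "i \<in> {i\<in>G a. t' < sc a i}"
      show "i \<in> {i\<in>G a. t \<le> sc a i}"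
      proof (rule ccontr)
        assume "i \<notin> {i\<in>G a. t \<le> sc a i}"
        hence "sc a i \<in> L0" using i unfolding L0_def S_def by auto
        hence "sc a i \<le> t'" unfolding t'_def using Max_ge[OF L0ne(2)] by auto
        thus False using i by auto
      qed
    qed
    hence "cg t' \<le> real (card {i\<in>G a. t \<le> sc a i})"
      unfolding cg_def using finG by (simp add: card_mono)
    ultimately show ?thesis using split by auto
  next
    case False
    hence "{i\<in>G a. t \<le> sc a i} = G a" unfolding S_def by force
    thus ?thesis using split qN unfolding N_def by simp
  qed
  define p where "p = (q - cg t) / ce t"
  have p0: "0 \<le> p" unfolding p_def using cgt ce_pos by auto
  have p1: "p \<le> 1" unfolding p_def using up ce_pos by (simp add: divide_le_eq_1)
  have "(\<Sum>i\<in>G a. thr_clf t p (sc a i)) = q"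
    unfolding sum_thr using ce_pos unfolding p_def cg_def[symmetric] ce_def[symmetric] by simp
  hence "pos_rate D c a (thr_clf t p) = 1 - \<tau>"
    unfolding pos_rate_eq q_def using N_pos[OF a] by simp
  thus ?thesis using tS p0 p1 by blast
qed

lemma H_form:
  assumes a: "a \<in> {1,2}" and tau: "\<tau> \<in> {0..1}"
  shows "\<exists>t p. t \<in> S a \<and> 0 \<le> p \<and> p \<le> 1 \<and> H a \<tau> = thr_clf t p \<and> pos_rate D c a (H a \<tau>) = 1 - \<tau>"
proof -
  obtain t p where tp: "t \<in> S a" "0 \<le> p" "p \<le> 1" "pos_rate D c a (thr_clf t p) = 1 - \<tau>"
    using exist_thr[OF a tau] by blast
  have ex: "\<exists>h. \<exists>t p. t \<in> (\<lambda>i. score D c (xs_of D i) a) ` grp D a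
       \<and> 0 \<le> p \<and> p \<le> 1 \<and> h = thr_clf t p \<and> pos_rate D c a h = 1 - \<tau>"
    using tp unfolding S_def sc_def by blast
  have "\<exists>t p. t \<in> (\<lambda>i. score D c (xs_of D i) a) ` grp D a
       \<and> 0 \<le> p \<and> p \<le> 1 \<and> H a \<tau> = thr_clf t p \<and> pos_rate D c a (H a \<tau>) = 1 - \<tau>"
    unfolding norm_thr_clf_def by (rule someI_ex[OF ex])
  thus ?thesis unfolding S_def sc_def by blast
qed

lemma sumH:
  assumes a: "a \<in> {1,2}" and tau: "\<tau> \<in> {0..1}"
  shows "(\<Sum>i\<in>G a. H a \<tau> (sc a i)) = (1 - \<tau>) * N a"
proof -
  obtain t p where "pos_rate D c a (H a \<tau>) = 1 - \<tau>" using H_form[OF a tau] by blast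
  thus ?thesis unfolding pos_rate_eq using N_pos[OF a] by (simp add: field_simps)
qed

lemma H_bounds:
  assumes a: "a \<in> {1,2}" and tau: "\<tau> \<in> {0..1}"
  shows "0 \<le> H a \<tau> s \<and> H a \<tau> s \<le> 1"
proof -
  obtain t p where "0 \<le> p" "p \<le> 1" "H a \<tau> = thr_clf t p" using H_form[OF a tau] by blast
  thus ?thesis using thr_bounds by simp
qed

lemma nest:
  assumes "0 \<le> p" "p \<le> 1" "0 \<le> p'" "p' \<le> 1"
    and le: "(\<Sum>i\<in>G a. thr_clf t' p' (sc a i)) \<le> (\<Sum>i\<in>G a. thr_clf t p (sc a i))"
    and i: "i \<in> G a"
  shows "thr_clf t' p' (sc a i) \<le> thr_clf t p (sc a i)"
proof (rule ccontr)
  assume "\<not> ?thesis"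
  hence lt: "thr_clf t p (sc a i) < thr_clf t' p' (sc a i)" by auto
  have "\<forall>j\<in>G a. thr_clf t p (sc a j) \<le> thr_clf t' p' (sc a j)"
    using thr_pointwise[OF assms(1-4) lt] by auto
  hence "(\<Sum>i\<in>G a. thr_clf t p (sc a i)) < (\<Sum>i\<in>G a. thr_clf t' p' (sc a i))"
    by (rule sum_strict_mono_ex1[OF finG]) (use lt i in auto)
  thus False using le by auto
qed

lemma H_mono:
  assumes a: "a \<in> {1,2}" and tau: "\<tau> \<in> {0..1}" "\<tau>' \<in> {0..1}" "\<tau> \<le> \<tau>'" and i: "i \<in> G a"
  shows "H a \<tau>' (sc a i) \<le> H a \<tau> (sc a i)"
proof -
  obtain t p where tp: "0 \<le> p" "p \<le> 1" "H a \<tau> = thr_clf t p" using H_form[OF a tau(1)] by blast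
  obtain t' p' where tp': "0 \<le> p'" "p' \<le> 1" "H a \<tau>' = thr_clf t' p'" using H_form[OF a tau(2)] by blast
  have "(\<Sum>i\<in>G a. H a \<tau>' (sc a i)) \<le> (\<Sum>i\<in>G a. H a \<tau> (sc a i))"
    unfolding sumH[OF a tau(1)] sumH[OF a tau(2)] using tau(3) N_pos[OF a] by (simp add: mult_right_mono)
  thus ?thesis unfolding tp(3) tp'(3) by (rule nest[OF tp(1,2) tp'(1,2) _ i])
qed

lemma H_lip:
  assumes a: "a \<in> {1,2}" and tau: "\<tau> \<in> {0..1}" "\<tau>' \<in> {0..1}" and i: "i \<in> G a"
  shows "\<bar>H a \<tau> (sc a i) - H a \<tau>' (sc a i)\<bar> \<le> N a * \<bar>\<tau> - \<tau>'\<bar>"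
proof -
  have gen: "\<bar>H a x (sc a i) - H a y (sc a i)\<bar> \<le> N a * \<bar>x - y\<bar>"
    if xy: "x \<in> {0..1}" "y \<in> {0..1}" "x \<le> y" for x y
  proof -
    have nn: "\<forall>j\<in>G a. 0 \<le> H a x (sc a j) - H a y (sc a j)" using H_mono[OF a xy] by auto
    have "H a x (sc a i) - H a y (sc a i) \<le> (\<Sum>j\<in>G a. H a x (sc a j) - H a y (sc a j))"
      using nn by (intro member_le_sum[OF i] finG) auto
    also have "\<dots> = (y - x) * N a" unfolding sum_subtractf sumH[OF a xy(1)] sumH[OF a xy(2)]
      by (simp add: algebra_simps)
    finally have f: "H a x (sc a i) - H a y (sc a i) \<le> (y - x) * N a" .
    have g: "0 \<le> H a x (sc a i) - H a y (sc a i)" using nn i by auto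
    have e1: "\<bar>H a x (sc a i) - H a y (sc a i)\<bar> = H a x (sc a i) - H a y (sc a i)" using g by simp
    have e2: "\<bar>x - y\<bar> = y - x" using xy(3) by simp
    show ?thesis unfolding e1 e2 using f by (simp add: mult.commute)
  qed
  show ?thesis
  proof (cases "\<tau> \<le> \<tau>'")
    case True show ?thesis using gen[OF tau True] by simp
  next
    case False
    hence "\<bar>H a \<tau>' (sc a i) - H a \<tau> (sc a i)\<bar> \<le> N a * \<bar>\<tau>' - \<tau>\<bar>" using gen[OF tau(2,1)] by simp
    thus ?thesis by (metis abs_minus_commute)
  qed
qed

lemma H_cont:
  assumes a: "a \<in> {1,2}" and i: "i \<in> G a"
  shows "continuous_on {0..1} (\<lambda>\<tau>. H a \<tau> (sc a i))"
proof (rule lipschitz_on_continuous_on)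
  show "(N a)-lipschitz_on {0..1} (\<lambda>\<tau>. H a \<tau> (sc a i))"
  proof (rule lipschitz_onI)
    fix x y :: real assume "x \<in> {0..1}" "y \<in> {0..1}"
    thus "dist (H a x (sc a i)) (H a y (sc a i)) \<le> N a * dist x y"
      unfolding dist_real_def by (rule H_lip[OF a _ _ i])
  next
    show "0 \<le> N a" using N_pos[OF a] by simp
  qed
qed

lemma sc_nonneg: "0 \<le> sc a i"
  unfolding sc_def score_def cell_rate_def by simp

lemma yscore:
  assumes a: "a \<in> {1,2}"
  shows "(\<Sum>i\<in>G a. if ys_of D i = 1 then f (sc a i) else 0) = (\<Sum>i\<in>G a. sc a i * f (sc a i))"
proof -
  define cell where "cell i = c a (xs_of D i)" for i
  define r where "r m = cell_rate D c a m" for m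
  have scr: "sc a i = r (cell i)" for i unfolding sc_def score_def r_def cell_def by simp
  define T where "T = cell ` G a"
  have finT: "finite T" unfolding T_def using finG by auto
  have inner: "(\<Sum>i\<in>{i. i \<in> G a \<and> cell i = m}. if ys_of D i = 1 then f (sc a i) else 0)
      = (\<Sum>i\<in>{i. i \<in> G a \<and> cell i = m}. sc a i * f (sc a i))" if m: "m \<in> T" for m
  proof -
    define C where "C = {i. i \<in> G a \<and> cell i = m}"
    have finC: "finite C" unfolding C_def using finG by auto
    have Cne: "C \<noteq> {}" using m unfolding C_def T_def by auto
    have cpos: "card C > 0" using finC Cne by (simp add: card_gt_0_iff)
    have e1: "(\<Sum>i\<in>C. if ys_of D i = 1 then f (sc a i) else 0) = (\<Sum>i\<in>C. if ys_of D i = 1 then f (r m) else 0)"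
      by (rule sum.cong) (auto simp: C_def scr)
    have e2: "(\<Sum>i\<in>C. sc a i * f (sc a i)) = (\<Sum>i\<in>C. r m * f (r m))"
      by (rule sum.cong) (auto simp: C_def scr)
    have cc: "{i\<in>C. ys_of D i = 1} = {i \<in> grp D a. c a (xs_of D i) = m \<and> ys_of D i = 1}"
      unfolding C_def cell_def by auto
    have cc2: "C = {i \<in> grp D a. c a (xs_of D i) = m}" unfolding C_def cell_def by auto
    have rm: "r m * real (card C) = real (card {i\<in>C. ys_of D i = 1})"
      unfolding r_def cell_rate_def cc cc2[symmetric] using cpos by simp
    have "(\<Sum>i\<in>C. if ys_of D i = 1 then f (r m) else 0) = f (r m) * real (card {i\<in>C. ys_of D i = 1})"
      by (rule sum_if_card[OF finC])
    also have "\<dots> = r m * f (r m) * real (card C)" using rm by (simp add: algebra_simps)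
    also have "\<dots> = (\<Sum>i\<in>C. r m * f (r m))" by simp
    finally show ?thesis using e1 e2 unfolding C_def by simp
  qed
  have "(\<Sum>i\<in>G a. if ys_of D i = 1 then f (sc a i) else 0)
      = (\<Sum>m\<in>T. \<Sum>i\<in>{i. i \<in> G a \<and> cell i = m}. if ys_of D i = 1 then f (sc a i) else 0)"
    by (rule sum.group[symmetric, OF finG finT]) (simp add: T_def)
  also have "\<dots> = (\<Sum>m\<in>T. \<Sum>i\<in>{i. i \<in> G a \<and> cell i = m}. sc a i * f (sc a i))"
    by (rule sum.cong[OF refl]) (rule inner)
  also have "\<dots> = (\<Sum>i\<in>G a. sc a i * f (sc a i))"
    by (rule sum.group[OF finG finT]) (simp add: T_def)
  finally show ?thesis .
qed

lemma greedy:
  assumes w: "\<forall>i\<in>G a. 0 \<le> w i \<and> w i \<le> 1" and p: "0 \<le> p" "p \<le> 1"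
    and sw: "(\<Sum>i\<in>G a. w i) = (\<Sum>i\<in>G a. thr_clf t p (sc a i))"
  shows "(\<Sum>i\<in>G a. sc a i * w i) \<le> (\<Sum>i\<in>G a. sc a i * thr_clf t p (sc a i))"
proof -
  let ?h = "\<lambda>i. thr_clf t p (sc a i)"
  have trm: "0 \<le> (sc a i - t) * (?h i - w i)" if i: "i \<in> G a" for i
  proof (cases "t < sc a i")
    case True
    hence "?h i = 1" unfolding thr_clf_def by simp
    thus ?thesis using True w i by auto
  next
    case False
    show ?thesis
    proof (cases "sc a i = t")
      case True thus ?thesis by simp
    next
      case False
      hence "sc a i < t" "?h i = 0" using \<open>\<not> t < sc a i\<close> unfolding thr_clf_def by auto
      hence "sc a i - t \<le> 0" "?h i - w i \<le> 0" using w i by auto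
      thus ?thesis by (simp add: mult_nonpos_nonpos)
    qed
  qed
  have "0 \<le> (\<Sum>i\<in>G a. (sc a i - t) * (?h i - w i))" using trm by (simp add: sum_nonneg)
  also have "\<dots> = (\<Sum>i\<in>G a. (sc a i * ?h i - sc a i * w i) - t * (?h i - w i))"
    by (rule sum.cong) (auto simp: algebra_simps)
  also have "\<dots> = (\<Sum>i\<in>G a. sc a i * ?h i) - (\<Sum>i\<in>G a. sc a i * w i) - t * ((\<Sum>i\<in>G a. ?h i) - (\<Sum>i\<in>G a. w i))"
    by (simp add: sum_subtractf sum_distrib_left[symmetric])
  also have "\<dots> = (\<Sum>i\<in>G a. sc a i * ?h i) - (\<Sum>i\<in>G a. sc a i * w i)" using sw by simp
  finally show ?thesis by simp
qed

definition PosS where "PosS a \<tau> = (\<Sum>i\<in>G a. sc a i * H a \<tau> (sc a i))"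
definition P where "P a = real (card {i\<in>G a. ys_of D i = 1})"

lemma PosS_concave:
  assumes a: "a \<in> {1,2}" and x: "x \<in> {0..1}" and y: "y \<in> {0..1}" and t: "t \<in> {0..1}"
  shows "(1-t) * PosS a x + t * PosS a y \<le> PosS a ((1-t)*x + t*y)"
proof -
  define m where "m = (1-t)*x + t*y"
  have m01: "m \<in> {0..1}" unfolding m_def using x y t
    by (auto intro: convex_bound_le)
  define w where "w i = (1-t) * H a x (sc a i) + t * H a y (sc a i)" for i
  have wb: "\<forall>i\<in>G a. 0 \<le> w i \<and> w i \<le> 1"
  proof
    fix i
    have hx: "0 \<le> H a x (sc a i)" "H a x (sc a i) \<le> 1" using H_bounds[OF a x] by auto
    have hy: "0 \<le> H a y (sc a i)" "H a y (sc a i) \<le> 1" using H_bounds[OF a y] by auto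
    have t0: "0 \<le> t" "t \<le> 1" using t by auto
    have "0 \<le> w i" unfolding w_def using hx hy t0 by simp
    moreover have "w i \<le> (1-t) * 1 + t * 1" unfolding w_def
      using hx hy t0 by (intro add_mono mult_left_mono) auto
    ultimately show "0 \<le> w i \<and> w i \<le> 1" by simp
  qed
  obtain tt p where tp: "0 \<le> p" "p \<le> 1" "H a m = thr_clf tt p" using H_form[OF a m01] by blast
  have sw: "(\<Sum>i\<in>G a. w i) = (\<Sum>i\<in>G a. thr_clf tt p (sc a i))"
  proof -
    have "(\<Sum>i\<in>G a. w i) = (1-t) * (\<Sum>i\<in>G a. H a x (sc a i)) + t * (\<Sum>i\<in>G a. H a y (sc a i))"
      unfolding w_def by (simp add: sum.distrib sum_distrib_left)
    also have "\<dots> = (1 - m) * N a" unfolding sumH[OF a x] sumH[OF a y] m_def by (simp add: algebra_simps)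
    also have "\<dots> = (\<Sum>i\<in>G a. thr_clf tt p (sc a i))" using sumH[OF a m01] tp(3) by simp
    finally show ?thesis .
  qed
  have "(\<Sum>i\<in>G a. sc a i * w i) \<le> (\<Sum>i\<in>G a. sc a i * thr_clf tt p (sc a i))"
    by (rule greedy[OF wb tp(1,2) sw])
  moreover have "(\<Sum>i\<in>G a. sc a i * w i) = (1-t) * PosS a x + t * PosS a y"
  proof -
    have "(\<Sum>i\<in>G a. sc a i * w i) = (\<Sum>i\<in>G a. (1-t) * (sc a i * H a x (sc a i)) + t * (sc a i * H a y (sc a i)))"
      by (rule sum.cong) (simp_all add: w_def algebra_simps)
    also have "\<dots> = (1-t) * PosS a x + t * PosS a y"
      unfolding PosS_def by (simp add: sum.distrib sum_distrib_left)
    finally show ?thesis .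
  qed
  ultimately show ?thesis unfolding PosS_def m_def[symmetric] tp(3) by simp
qed

lemma PosS_anti:
  assumes a: "a \<in> {1,2}" and x: "x \<in> {0..1}" and y: "y \<in> {0..1}" and le: "x \<le> y"
  shows "PosS a y \<le> PosS a x"
  unfolding PosS_def
  by (rule sum_mono) (use H_mono[OF a x y le] sc_nonneg in \<open>simp add: mult_left_mono\<close>)

lemma PosS_cont:
  assumes a: "a \<in> {1,2}"
  shows "continuous_on {0..1} (PosS a)"
proof -
  have "continuous_on {0..1} (\<lambda>\<tau>. \<Sum>i\<in>G a. sc a i * H a \<tau> (sc a i))"
    by (rule continuous_on_sum) (use H_cont[OF a] in \<open>auto intro: continuous_on_mult_left\<close>)
  thus ?thesis unfolding PosS_def[abs_def] .
qed

lemma Pos_eq: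
  assumes a: "a \<in> {1,2}"
  shows "(\<Sum>i\<in>G a. if ys_of D i = 1 then H a \<tau> (sc a i) else 0) = PosS a \<tau>"
  unfolding PosS_def by (rule yscore[OF a])

definition ll where
  "ll a \<tau> = (\<Sum>i\<in>G a. if ys_of D i = 1 then 1 - H a \<tau> (sc a i) else H a \<tau> (sc a i)) / real (length D)"
definition R where "R a = {i. i \<in> G a \<and> relevant k D i}"
definition bb where
  "bb a \<tau> = (\<Sum>i\<in>R a. H a \<tau> (sc a i)) / real (card (R a))"

lemma len_pos: "real (length D) > 0"
proof -
  obtain i where "i \<in> G 1" using G_ne[of 1] by auto
  thus ?thesis unfolding grp_def by auto
qed

lemma ll_eq:
  assumes a: "a \<in> {1,2}" and x: "x \<in> {0..1}"
  shows "ll a x = (P a + (1 - x) * N a - 2 * PosS a x) / real (length D)"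
proof -
  have "(\<Sum>i\<in>G a. if ys_of D i = 1 then 1 - H a x (sc a i) else H a x (sc a i))
     = (\<Sum>i\<in>G a. (if ys_of D i = 1 then 1 else 0) + H a x (sc a i) - 2 * (if ys_of D i = 1 then H a x (sc a i) else 0))"
    by (rule sum.cong) auto
  also have "\<dots> = (\<Sum>i\<in>G a. if ys_of D i = 1 then 1 else 0) + (\<Sum>i\<in>G a. H a x (sc a i))
       - 2 * (\<Sum>i\<in>G a. if ys_of D i = 1 then H a x (sc a i) else 0)"
    by (simp add: sum.distrib sum_subtractf sum_distrib_left)
  also have "\<dots> = P a + (1 - x) * N a - 2 * PosS a x"
    unfolding Pos_eq[OF a] sumH[OF a x] P_def using sum_if_card[OF finG, of "\<lambda>i. ys_of D i = 1" 1 a] by simp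
  finally show ?thesis unfolding ll_def by simp
qed

lemma R_fin: "finite (R a)" unfolding R_def using finG by auto
lemma R_sub: "R a \<subseteq> G a" unfolding R_def by auto

lemma R_pos: "a \<in> {1,2} \<Longrightarrow> card (R a) > 0"
proof -
  assume a: "a \<in> {1,2}"
  have "R a \<noteq> {}"
  proof (cases k)
    case DemParity
    thus ?thesis unfolding R_def relevant_def using G_ne[OF a] by auto
  next
    case EqOpp
    then obtain i where "i \<in> G a" "ys_of D i = 1" using h4 a by blast
    thus ?thesis unfolding R_def relevant_def using EqOpp by auto
  qed
  thus ?thesis using R_fin by (simp add: card_gt_0_iff)
qed

lemma bb_DP: "k = DemParity \<Longrightarrow> a \<in> {1,2} \<Longrightarrow> x \<in> {0..1} \<Longrightarrow> bb a x = 1 - x"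
proof -
  assume k: "k = DemParity" and a: "a \<in> {1,2}" and x: "x \<in> {0..1}"
  have "R a = G a" using k unfolding R_def relevant_def by auto
  thus ?thesis unfolding bb_def sumH[OF a x, folded \<open>R a = G a\<close>] using N_pos[OF a]
    unfolding N_def by simp
qed

lemma P_pos: "k = EqOpp \<Longrightarrow> a \<in> {1,2} \<Longrightarrow> P a > 0"
proof -
  assume k: "k = EqOpp" and a: "a \<in> {1,2}"
  have "R a = {i\<in>G a. ys_of D i = 1}" using k unfolding R_def relevant_def by auto
  thus ?thesis using R_pos[OF a] unfolding P_def by simp
qed

lemma bb_EO: "k = EqOpp \<Longrightarrow> a \<in> {1,2} \<Longrightarrow> bb a x = PosS a x / P a"
proof -
  assume k: "k = EqOpp" and a: "a \<in> {1,2}"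
  have Re: "R a = {i\<in>G a. ys_of D i = 1}" using k unfolding R_def relevant_def by auto
  have "(\<Sum>i\<in>R a. H a x (sc a i)) = (\<Sum>i\<in>G a. if ys_of D i = 1 then H a x (sc a i) else 0)"
    unfolding Re by (rule sum.inter_filter[OF finG])
  thus ?thesis unfolding bb_def Pos_eq[OF a] P_def Re by simp
qed

lemma H_one:
  assumes a: "a \<in> {1,2}" and i: "i \<in> G a"
  shows "H a 0 (sc a i) = 1"
proof (rule ccontr)
  assume "H a 0 (sc a i) \<noteq> 1"
  hence lt: "H a 0 (sc a i) < 1" using H_bounds[OF a, of 0] by (meson atLeastAtMost_iff le_less zero_le_one order_refl)
  have "\<forall>j\<in>G a. H a 0 (sc a j) \<le> 1" using H_bounds[OF a, of 0] by auto
  hence "(\<Sum>j\<in>G a. H a 0 (sc a j)) < (\<Sum>j\<in>G a. 1)"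
    by (rule sum_strict_mono_ex1[OF finG]) (use lt i in auto)
  thus False using sumH[OF a, of 0] unfolding N_def by simp
qed

lemma bb_zero: "a \<in> {1,2} \<Longrightarrow> bb a 0 = 1"
proof -
  assume a: "a \<in> {1,2}"
  have "(\<Sum>i\<in>R a. H a 0 (sc a i)) = (\<Sum>i\<in>R a. 1)"
    by (rule sum.cong) (use H_one[OF a] R_sub in auto)
  thus ?thesis unfolding bb_def using R_pos[OF a] by simp
qed

lemma bb_cont: "a \<in> {1,2} \<Longrightarrow> continuous_on {0..1} (bb a)"
proof -
  assume a: "a \<in> {1,2}"
  have "continuous_on {0..1} (\<lambda>\<tau>. (\<Sum>i\<in>R a. H a \<tau> (sc a i)) / real (card (R a)))"
    by (intro continuous_on_divide continuous_on_sum continuous_on_const)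
       (use H_cont[OF a] R_sub R_pos[OF a] in auto)
  thus ?thesis unfolding bb_def[abs_def] .
qed

lemma ll_cont: "a \<in> {1,2} \<Longrightarrow> continuous_on {0..1} (ll a)"
proof -
  assume a: "a \<in> {1,2}"
  have "continuous_on {0..1} (\<lambda>\<tau>. (\<Sum>i\<in>G a. if ys_of D i = 1 then 1 - H a \<tau> (sc a i) else H a \<tau> (sc a i)) / real (length D))"
  proof (intro continuous_on_divide continuous_on_sum continuous_on_const)
    fix i assume i: "i \<in> G a"
    show "continuous_on {0..1} (\<lambda>\<tau>. if ys_of D i = 1 then 1 - H a \<tau> (sc a i) else H a \<tau> (sc a i))"
      by (cases "ys_of D i = 1") (use H_cont[OF a i] in \<open>auto intro: continuous_on_diff continuous_on_const\<close>)
  next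
    show "\<forall>x\<in>{0..1}. real (length D) \<noteq> 0" using len_pos by auto
  qed
  thus ?thesis unfolding ll_def[abs_def] .
qed

lemma bb_anti:
  assumes a: "a \<in> {1,2}" and x: "x \<in> {0..1}" and y: "y \<in> {0..1}" and le: "x \<le> y"
  shows "bb a y \<le> bb a x"
proof -
  have "\<And>i. i \<in> R a \<Longrightarrow> H a y (sc a i) \<le> H a x (sc a i)"
    using H_mono[OF a x y le] R_sub[of a] by auto
  hence "(\<Sum>i\<in>R a. H a y (sc a i)) \<le> (\<Sum>i\<in>R a. H a x (sc a i))" by (rule sum_mono)
  thus ?thesis unfolding bb_def by (rule divide_right_mono) simp
qed

lemma lin_aux: "(u::real) \<le> u' \<Longrightarrow> bv \<le> av \<Longrightarrow> p + u - 2 * av \<le> p + u' - 2 * bv"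
  by linarith

lemma ll_mix:
  assumes a: "a \<in> {1,2}" and x: "x \<in> {0..1}" and y: "y \<in> {0..1}" and t: "t \<in> {0..1}"
    and s: "s \<in> {0..1}" "(1-t)*x + t*y \<le> s" "(1-t) * PosS a x + t * PosS a y \<le> PosS a s"
  shows "ll a s \<le> (1-t) * ll a x + t * ll a y"
proof -
  have "(1 - s) * N a \<le> (1 - ((1-t)*x + t*y)) * N a"
    by (rule mult_right_mono) (use s N_pos[OF a] in auto)
  hence "P a + (1 - s) * N a - 2 * PosS a s \<le> P a + (1 - ((1-t)*x + t*y)) * N a - 2 * ((1-t) * PosS a x + t * PosS a y)"
    using s(3) lin_aux by blast
  also have "\<dots> = (1-t) * (P a + (1 - x) * N a - 2 * PosS a x) + t * (P a + (1 - y) * N a - 2 * PosS a y)"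
    by (simp add: algebra_simps)
  finally have "(P a + (1 - s) * N a - 2 * PosS a s) / real (length D)
     \<le> ((1-t) * (P a + (1 - x) * N a - 2 * PosS a x) + t * (P a + (1 - y) * N a - 2 * PosS a y)) / real (length D)"
    using len_pos by (simp add: divide_right_mono)
  thus ?thesis unfolding ll_eq[OF a x] ll_eq[OF a y] ll_eq[OF a s(1)]
    by (simp add: add_divide_distrib)
qed

lemma gconv_inst:
  assumes a: "a \<in> {1,2}"
  shows "gconv (bb a) (ll a)"
  unfolding gconv_def
proof (intro ballI)
  fix x y t :: real assume x: "x \<in> {0..1}" and y: "y \<in> {0..1}" and t: "t \<in> {0..1}"
  define m where "m = (1-t)*x + t*y"
  have m01: "m \<in> {0..1}" unfolding m_def using x y t by (auto intro: convex_bound_le)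
  have conc: "(1-t) * PosS a x + t * PosS a y \<le> PosS a m" unfolding m_def by (rule PosS_concave[OF a x y t])
  show "\<exists>s\<in>{0..1}. bb a s = (1 - t) * bb a x + t * bb a y \<and> ll a s \<le> (1 - t) * ll a x + t * ll a y"
  proof (cases k)
    case DemParity
    have "bb a m = 1 - m" by (rule bb_DP[OF DemParity a m01])
    hence "bb a m = (1 - t) * bb a x + t * bb a y"
      unfolding bb_DP[OF DemParity a x] bb_DP[OF DemParity a y] m_def
      by (simp add: algebra_simps)
    moreover have "ll a m \<le> (1 - t) * ll a x + t * ll a y"
      by (rule ll_mix[OF a x y t m01]) (use conc m_def in auto)
    ultimately show ?thesis using m01 by blast
  next
    case EqOpp
    define hi where "hi = max x y"
    have hi01: "hi \<in> {0..1}" unfolding hi_def using x y by auto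
    have mhi: "m \<le> hi" unfolding m_def hi_def using t
      by (auto intro: convex_bound_le)
    define v where "v = (1-t) * PosS a x + t * PosS a y"
    have phx: "PosS a hi \<le> PosS a x" by (rule PosS_anti[OF a x hi01]) (simp add: hi_def)
    have phy: "PosS a hi \<le> PosS a y" by (rule PosS_anti[OF a y hi01]) (simp add: hi_def)
    have t0: "0 \<le> t" "t \<le> 1" using t by auto
    have "(1-t) * PosS a hi + t * PosS a hi \<le> v" unfolding v_def
      using phx phy t0 by (intro add_mono mult_left_mono) auto
    hence hv: "PosS a hi \<le> v" by (simp add: algebra_simps)
    have mv: "v \<le> PosS a m" using conc unfolding v_def .
    have cont: "continuous_on {m..hi} (PosS a)"
      by (rule continuous_on_subset[OF PosS_cont[OF a]]) (use m01 hi01 in auto)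
    obtain s where s: "m \<le> s" "s \<le> hi" "PosS a s = v" using IVT2'[OF hv mv mhi cont] by blast
    have s01: "s \<in> {0..1}" using s m01 hi01 by auto
    have "bb a s = (1 - t) * bb a x + t * bb a y"
      unfolding bb_EO[OF EqOpp a] s(3) v_def by (simp add: add_divide_distrib)
    moreover have "ll a s \<le> (1 - t) * ll a x + t * ll a y"
      by (rule ll_mix[OF a x y t s01]) (use s m_def v_def in auto)
    ultimately show ?thesis using s01 by blast
  qed
qed

lemma uniq_inst:
  assumes a: "a \<in> {1,2}" and x: "x \<in> {0..1}" and y: "y \<in> {0..1}"
    and e: "bb a x = bb a y" "ll a x = ll a y"
  shows "x = y"
proof (cases k)
  case DemParity
  then show ?thesis using e(1) unfolding bb_DP[OF DemParity a x] bb_DP[OF DemParity a y] by simp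
next
  case EqOpp
  have "PosS a x = PosS a y" using e(1) P_pos[OF EqOpp a] unfolding bb_EO[OF EqOpp a] by simp
  hence "(1 - x) * N a = (1 - y) * N a" using e(2) len_pos unfolding ll_eq[OF a x] ll_eq[OF a y] by simp
  thus ?thesis using N_pos[OF a] by simp
qed

lemma inst: "lexopt (bb 1) (bb 2) (ll 1) (ll 2)"
  by (unfold_locales)
     (auto intro: bb_cont ll_cont bb_anti gconv_inst uniq_inst simp: bb_zero)

lemma pred_at_eq:
  assumes "i \<in> G a"
  shows "pred_at D c \<tau> i = H a (if a = 1 then fst \<tau> else snd \<tau>) (sc a i)"
  using assms unfolding pred_at_def pp_clf_def sc_def grp_def by auto

lemma mis_loss_eq: "mis_loss D c = (\<lambda>\<tau>. ll 1 (fst \<tau>) + ll 2 (snd \<tau>))"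
proof
  fix \<tau> :: "real \<times> real"
  let ?g = "\<lambda>i. if ys_of D i = 1 then 1 - pred_at D c \<tau> i else pred_at D c \<tau> i"
  have U: "{..<length D} = G 1 \<union> G 2" using h1 unfolding grp_def by auto
  have I: "G 1 \<inter> G 2 = {}" unfolding grp_def by auto
  have s1: "(\<Sum>i\<in>G 1. ?g i) = (\<Sum>i\<in>G 1. if ys_of D i = 1 then 1 - H 1 (fst \<tau>) (sc 1 i) else H 1 (fst \<tau>) (sc 1 i))"
    by (rule sum.cong) (auto simp: pred_at_eq)
  have s2: "(\<Sum>i\<in>G 2. ?g i) = (\<Sum>i\<in>G 2. if ys_of D i = 1 then 1 - H 2 (snd \<tau>) (sc 2 i) else H 2 (snd \<tau>) (sc 2 i))"
    by (rule sum.cong) (auto simp: pred_at_eq)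
  have "(\<Sum>i<length D. ?g i) = (\<Sum>i\<in>G 1. ?g i) + (\<Sum>i\<in>G 2. ?g i)"
    unfolding U by (rule sum.union_disjoint[OF finG finG I])
  thus "mis_loss D c \<tau> = ll 1 (fst \<tau>) + ll 2 (snd \<tau>)"
    unfolding mis_loss_def ll_def s1[symmetric] s2[symmetric] by (simp add: add_divide_distrib)
qed

lemma bias_eq: "bias k D c = (\<lambda>\<tau>. bb 1 (fst \<tau>) - bb 2 (snd \<tau>))"
proof
  fix \<tau> :: "real \<times> real"
  have s1: "(\<Sum>i\<in>R 1. pred_at D c \<tau> i) = (\<Sum>i\<in>R 1. H 1 (fst \<tau>) (sc 1 i))"
    by (rule sum.cong[OF refl]) (simp add: pred_at_eq[OF subsetD[OF R_sub]])
  have s2: "(\<Sum>i\<in>R 2. pred_at D c \<tau> i) = (\<Sum>i\<in>R 2. H 2 (snd \<tau>) (sc 2 i))"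
    by (rule sum.cong[OF refl]) (simp add: pred_at_eq[OF subsetD[OF R_sub]])
  show "bias k D c \<tau> = bb 1 (fst \<tau>) - bb 2 (snd \<tau>)"
    unfolding bias_def bb_def R_def by (simp only: s1[unfolded R_def] s2[unfolded R_def])
qed

lemma pp_select_eq: "pp_select k D c \<beta> = lexopt.sel (bb 1) (bb 2) (ll 1) (ll 2) \<beta>"
proof -
  interpret lo: lexopt "bb 1" "bb 2" "ll 1" "ll 2" by (rule inst)
  show ?thesis
    unfolding pp_select_def lo.sel_def lo.A4_def lo.A3_def lo.A2_def lo.A1_def
      lo.F_def feasible_def mis_loss_eq bias_eq lo.L_def[abs_def] lo.B_def[abs_def]
    by simp
qed

theorem main: "slack_consistent (gabos_pp k D c)"
  unfolding slack_consistent_def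
proof (intro allI impI)
  interpret lo: lexopt "bb 1" "bb 2" "ll 1" "ll 2" by (rule inst)
  fix x :: 'x and a :: nat and \<beta>1 \<beta>2 \<beta>3 :: real
  assume as: "a \<in> {1, 2} \<and> 0 < \<beta>1 \<and> \<beta>1 < \<beta>2 \<and> \<beta>2 < \<beta>3"
  hence a: "a \<in> {1,2}" and b: "0 < \<beta>1" "\<beta>1 < \<beta>2" "\<beta>2 < \<beta>3" by auto
  obtain i where i: "i \<in> G a" "score D c x a = sc a i" using score_in_S[OF a] unfolding S_def by auto
  define T where "T \<beta> = (if a = 1 then fst (lo.sel \<beta>) else snd (lo.sel \<beta>))" for \<beta>
  have g: "gabos_pp k D c \<beta> x a = H a (T \<beta>) (sc a i)" for \<beta>
    unfolding gabos_pp_def pp_clf_def pp_select_eq T_def i(2) by simp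
  have T01: "T \<beta> \<in> {0..1}" if "0 \<le> \<beta>" for \<beta> using lo.sel_box[OF that] unfolding T_def by auto
  have btw: "(T \<beta>1 \<le> T \<beta>2 \<and> T \<beta>2 \<le> T \<beta>3) \<or> (T \<beta>2 \<le> T \<beta>1 \<and> T \<beta>3 \<le> T \<beta>2)"
    using lo.between[OF b] unfolding T_def by auto
  have t1: "T \<beta>1 \<in> {0..1}" "T \<beta>2 \<in> {0..1}" "T \<beta>3 \<in> {0..1}" using T01 b by auto
  show "gabos_pp k D c \<beta>1 x a \<le> gabos_pp k D c \<beta>2 x a \<and> gabos_pp k D c \<beta>2 x a \<le> gabos_pp k D c \<beta>3 x a \<or>
        gabos_pp k D c \<beta>2 x a \<le> gabos_pp k D c \<beta>1 x a \<and> gabos_pp k D c \<beta>3 x a \<le> gabos_pp k D c \<beta>2 x a"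
    unfolding g
  proof (cases "T \<beta>1 \<le> T \<beta>2 \<and> T \<beta>2 \<le> T \<beta>3")
    case True
    then show "H a (T \<beta>1) (sc a i) \<le> H a (T \<beta>2) (sc a i) \<and> H a (T \<beta>2) (sc a i) \<le> H a (T \<beta>3) (sc a i) \<or>
        H a (T \<beta>2) (sc a i) \<le> H a (T \<beta>1) (sc a i) \<and> H a (T \<beta>3) (sc a i) \<le> H a (T \<beta>2) (sc a i)"
      using H_mono[OF a t1(1) t1(2) _ i(1)] H_mono[OF a t1(2) t1(3) _ i(1)] by auto
  next
    case False
    hence "T \<beta>2 \<le> T \<beta>1 \<and> T \<beta>3 \<le> T \<beta>2" using btw by auto
    then show "H a (T \<beta>1) (sc a i) \<le> H a (T \<beta>2) (sc a i) \<and> H a (T \<beta>2) (sc a i) \<le> H a (T \<beta>3) (sc a i) \<or>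
        H a (T \<beta>2) (sc a i) \<le> H a (T \<beta>1) (sc a i) \<and> H a (T \<beta>3) (sc a i) \<le> H a (T \<beta>2) (sc a i)"
      using H_mono[OF a t1(2) t1(1) _ i(1)] H_mono[OF a t1(3) t1(2) _ i(1)] by auto
  qed
qed

end

theorem theorem4:
  fixes D :: "'x dataset" and c :: "nat \<Rightarrow> 'x \<Rightarrow> nat" and M :: "nat \<Rightarrow> nat"
    and k :: bias_kind
  assumes "\<forall>i<length D. as_of D i \<in> {1, 2} \<and> ys_of D i \<in> {0, 1}"
    and "\<forall>j\<in>{1, 2}. \<forall>x. c j x \<in> {1..M j}"
    and "\<forall>j\<in>{1, 2}. \<forall>m\<in>{1..M j}. \<exists>i\<in>grp D j. c j (xs_of D i) = m"
    and "k = EqOpp \<Longrightarrow> \<forall>j\<in>{1, 2}. \<exists>i\<in>grp D j. ys_of D i = 1"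
  shows "slack_consistent (gabos_pp k D c)"
proof -
  interpret st: setting D c M k using assms by (unfold_locales) auto
  show ?thesis by (rule st.main)
qed

end
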